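(* Let $\Pi$ be a finite set of proposition symbols and $I=[a]$ with $a$ a positive integer. Every $(\Pi,I)$-formula $\varphi$ of graded multimodal logic of modal depth $n$ is logically equivalent to a recursively enumerable disjunction of full graded multimodal $(\Pi,I)$-types of modal depth $n$; i.e., there is a recursively enumerable set $\Phi$ of full graded multimodal $(\Pi,I)$-types of modal depth $n$ such that for every finite pointed $(\Pi,I)$-model $(M,w)$, $(M,w)\models\varphi$ iff $(M,w)\models\tau$ for some $\tau\in\Phi$.
   Context: $(\Pi,I)$-formulae of graded multimodal logic (GMML) are generated by $\varphi ::= \top \mid p \mid \neg\varphi \mid (\varphi\land\varphi) \mid \langle\alpha\rangle_{\geq k}\varphi$ with $p\in\Pi$, $\alpha\in I$, $k\in\mathbb N$; $\langle\alpha\rangle_{=k}\varphi$ abbreviates $\langle\alpha\rangle_{\geq k}\varphi\land\neg\langle\alpha\rangle_{\geq k+1}\varphi$. The modal depth is the maximum nesting depth of diamonds. A $(\Pi,I)$-model is $M=(W,(R_\alpha)_{\alpha\in I},V)$ with $W$ nonempty finite, $R_\alpha\subseteq W\times W$, $V\colon\Pi\to\wp(W)$; a pointed model is $(M,w)$, $w\in W$; $\mathcal N^\alpha(w)=\{v:(w,v)\in R_\alpha\}$. All models are finite. Semantics: $(M,w)\models p$ iff $w\in V(p)$, Boolean cases standard, $(M,w)\models\langle\alpha\rangle_{\geq k}\psi$ iff $|\{v\in\mathcal N^\alpha(w):(M,v)\models\psi\}|\geq k$. Graded multimodal types: $\tau^{(M,w)}_{\varepsilon}$ is the conjunction (in a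 fixed canonical order and bracketing) of all $p\in\Pi$ with $w\in V(p)$ and all $\neg p$ with $p\in\Pi$, $w\notin V(p)$ (it is $\top$ if $\Pi=\emptyset$). For a width $\mathbf k=(\mathbf k_1,\dots,\mathbf k_n)$ with $\mathbf k_i\in\mathbb N^{|I|}$, let $T_{\mathbf k}$ be the set of all types of width $\mathbf k$ of all finite pointed $(\Pi,I)$-models; for $\mathbf k_0=(k_1,\dots,k_{|I|})\in\mathbb N^{|I|}$ define $\tau^{(M,w)}_{(\mathbf k_0,\mathbf k_1,\dots,\mathbf k_n)}$ as the canonically ordered conjunction of $\tau^{(M,w)}_\varepsilon$; all $\langle\alpha\rangle_{=\ell}\tau$ with $\alpha\in I$, $1\le\ell\le k_\alpha-1$, $\tau\in T_{\mathbf k}$ and $(M,w)\models\langle\alpha\rangle_{=\ell}\tau$; all $\langle\alpha\rangle_{\geq k_\alpha}\tau$ with $\alpha\in I$, $\tau\in T_{\mathbf k}$ and $(M,w)\models\langle\alpha\rangle_{\geq k_\alpha}\tau$; and all $\langle\alpha\rangle_{=|\mathcal N^\alpha(w)|}\top$ with $\alpha\in I$ and $k_\alpha>|\mathcal N^\alpha(w)|$. The full graded multimodal $(\Pi,I)$-type of modal depth $0$ of $(M,w)$ is $\tau^{(M,w)}_0=\tau^{(M,w)}_\varepsilon$; that of modal depth $n+1$ is $\tau^{(M,w)}_{n+1}=\tau^{(M,w)}_{(\mathbf k_1,\dots,\mathbf k_{n+1})}$ for any widths $\mathbf k_i=(k_{i,1},\dots,k_{i,|I|})$ with $k_{i,\alpha}>\max\{|\mathcal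 N^\alpha(v)| : (w,v)\in(\bigcup_{\beta\in I}R_\beta)^{i-1}\}$ for all $i\in[n+1]$, $\alpha\in I$. A full graded multimodal type of modal depth $n$ is any formula of the form $\tau^{(M,w)}_n$. *)

theory Defs
  imports Main "HOL-Library.Nat_Bijection"
begin

text \<open>Proposition symbols and modality indices are natural numbers; a
(Pi,I)-formula is a formula all of whose symbols lie in Pi and indices in I.\<close>

datatype form =
    Top
  | Prop nat
  | Neg form
  | And form form
  | Dia nat nat form   (* Dia alpha k phi  =  <alpha>_{>=k} phi *)

definition Dia_eq :: "nat \<Rightarrow> nat \<Rightarrow> form \<Rightarrow> form" where
  "Dia_eq \<alpha> k \<phi> = And (Dia \<alpha> k \<phi>) (Neg (Dia \<alpha> (Suc k) \<phi>))"

fun wff :: "nat set \<Rightarrow> nat set \<Rightarrow> form \<Rightarrow> bool" where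
  "wff \<Pi> I Top = True"
| "wff \<Pi> I (Prop p) = (p \<in> \<Pi>)"
| "wff \<Pi> I (Neg \<phi>) = wff \<Pi> I \<phi>"
| "wff \<Pi> I (And \<phi> \<psi>) = (wff \<Pi> I \<phi> \<and> wff \<Pi> I \<psi>)"
| "wff \<Pi> I (Dia \<alpha> k \<phi>) = (\<alpha> \<in> I \<and> wff \<Pi> I \<phi>)"

fun md :: "form \<Rightarrow> nat" where
  "md Top = 0"
| "md (Prop p) = 0"
| "md (Neg \<phi>) = md \<phi>"
| "md (And \<phi> \<psi>) = max (md \<phi>) (md \<psi>)"
| "md (Dia \<alpha> k \<phi>) = Suc (md \<phi>)"

record 'w kmodel =
  W   :: "'w set"
  Rel :: "nat \<Rightarrow> ('w \<times> 'w) set"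
  Val :: "nat \<Rightarrow> 'w set"

definition is_model :: "nat set \<Rightarrow> nat set \<Rightarrow> 'w kmodel \<Rightarrow> bool" where
  "is_model \<Pi> I M \<longleftrightarrow> finite (W M) \<and> W M \<noteq> {} \<and>
     (\<forall>\<alpha>\<in>I. Rel M \<alpha> \<subseteq> W M \<times> W M) \<and> (\<forall>p\<in>\<Pi>. Val M p \<subseteq> W M)"

definition nbh :: "'w kmodel \<Rightarrow> nat \<Rightarrow> 'w \<Rightarrow> 'w set" where
  "nbh M \<alpha> w = {v. (w, v) \<in> Rel M \<alpha>}"

fun sat :: "'w kmodel \<Rightarrow> 'w \<Rightarrow> form \<Rightarrow> bool" where
  "sat M w Top = True"
| "sat M w (Prop p) = (w \<in> Val M p)"
| "sat M w (Neg \<phi>) = (\<not> sat M w \<phi>)"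
| "sat M w (And \<phi> \<psi>) = (sat M w \<phi> \<and> sat M w \<psi>)"
| "sat M w (Dia \<alpha> k \<phi>) = (k \<le> card {v \<in> nbh M \<alpha> w. sat M v \<phi>})"

fun code :: "form \<Rightarrow> nat" where
  "code Top = prod_encode (0, 0)"
| "code (Prop p) = prod_encode (1, p)"
| "code (Neg \<phi>) = prod_encode (2, code \<phi>)"
| "code (And \<phi> \<psi>) = prod_encode (3, prod_encode (code \<phi>, code \<psi>))"
| "code (Dia \<alpha> k \<phi>) = prod_encode (4, prod_encode (\<alpha>, prod_encode (k, code \<phi>)))"

fun conj_list :: "form list \<Rightarrow> form" where
  "conj_list [] = Top"
| "conj_list [\<phi>] = \<phi>"
| "conj_list (\<phi> # \<psi> # \<phi>s) = And \<phi> (conj_list (\<psi> # \<phi>s))"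

definition conj_set :: "form set \<Rightarrow> form" where
  "conj_set S = conj_list (map (inv code) (sorted_list_of_set (code ` S)))"

definition type_eps :: "nat set \<Rightarrow> 'w kmodel \<Rightarrow> 'w \<Rightarrow> form" where
  "type_eps \<Pi> M w = conj_set ({Prop p | p. p \<in> \<Pi> \<and> w \<in> Val M p}
                             \<union> {Neg (Prop p) | p. p \<in> \<Pi> \<and> w \<notin> Val M p})"

text \<open>Type of width ks (a list of vectors in N^I, head = outermost width).
The set T of types of the inner width ranges over all finite pointed
(Pi,I)-models; models up to isomorphism are represented with worlds in nat.\<close>
primrec gtype :: "nat set \<Rightarrow> nat set \<Rightarrow> (nat \<Rightarrow> nat) list \<Rightarrow> nat kmodel \<Rightarrow> nat \<Rightarrow> form" where
  "gtype \<Pi> I [] M w = type_eps \<Pi> M w"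
| "gtype \<Pi> I (k # ks) M w =
    (let T = {gtype \<Pi> I ks M' v | M' v. is_model \<Pi> I M' \<and> v \<in> W M'} in
     conj_set ({type_eps \<Pi> M w}
       \<union> {Dia_eq \<alpha> l \<tau> | \<alpha> l \<tau>. \<alpha> \<in> I \<and> 1 \<le> l \<and> l \<le> k \<alpha> - 1 \<and> \<tau> \<in> T \<and> sat M w (Dia_eq \<alpha> l \<tau>)}
       \<union> {Dia \<alpha> (k \<alpha>) \<tau> | \<alpha> \<tau>. \<alpha> \<in> I \<and> \<tau> \<in> T \<and> sat M w (Dia \<alpha> (k \<alpha>) \<tau>)}
       \<union> {Dia_eq \<alpha> (card (nbh M \<alpha> w)) Top | \<alpha>. \<alpha> \<in> I \<and> card (nbh M \<alpha> w) < k \<alpha>}))"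

definition all_rel :: "nat set \<Rightarrow> 'w kmodel \<Rightarrow> ('w \<times> 'w) set" where
  "all_rel I M = (\<Union>\<beta>\<in>I. Rel M \<beta>)"

text \<open>Admissible widths for the full type of depth length ks at (M,w):
k_{i,alpha} > max {|N^alpha(v)| : (w,v) in R^(i-1)} (max of the empty set = 0).\<close>
definition admissible_widths :: "nat set \<Rightarrow> nat kmodel \<Rightarrow> nat \<Rightarrow> (nat \<Rightarrow> nat) list \<Rightarrow> bool" where
  "admissible_widths I M w ks \<longleftrightarrow>
     (\<forall>i < length ks. \<forall>\<alpha>\<in>I. 0 < (ks ! i) \<alpha> \<and>
        (\<forall>v. (w, v) \<in> (all_rel I M) ^^ i \<longrightarrow> card (nbh M \<alpha> v) < (ks ! i) \<alpha>))"

text \<open>A full graded multimodal (Pi,I)-type of modal depth n is any formula of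
the form tau_n^(M,w) for some finite pointed model; we quantify directly over
admissible widths (the paper asserts independence of the choice).\<close>
definition is_full_type :: "nat set \<Rightarrow> nat set \<Rightarrow> nat \<Rightarrow> form \<Rightarrow> bool" where
  "is_full_type \<Pi> I n \<tau> \<longleftrightarrow>
     (\<exists>M w ks. is_model \<Pi> I M \<and> w \<in> W M \<and> length ks = n \<and>
               admissible_widths I M w ks \<and> \<tau> = gtype \<Pi> I ks M w)"

datatype recf = Zf | Sf | Proj nat | Comp recf "recf list" | Prim recf recf | Mn recf

inductive eval :: "recf \<Rightarrow> nat list \<Rightarrow> nat \<Rightarrow> bool" where
  ev_Z: "eval Zf xs 0"
| ev_S: "eval Sf (x # xs) (Suc x)"
| ev_Proj: "i < length xs \<Longrightarrow> eval (Proj i) xs (xs ! i)"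
| ev_Comp: "length ys = length gs \<Longrightarrow> (\<forall>i < length gs. eval (gs ! i) xs (ys ! i))
            \<Longrightarrow> eval f ys z \<Longrightarrow> eval (Comp f gs) xs z"
| ev_Prim0: "eval f xs y \<Longrightarrow> eval (Prim f g) (0 # xs) y"
| ev_PrimS: "eval (Prim f g) (n # xs) y \<Longrightarrow> eval g (y # n # xs) z
             \<Longrightarrow> eval (Prim f g) (Suc n # xs) z"
| ev_Mn: "eval f (n # xs) 0 \<Longrightarrow> (\<forall>m < n. \<exists>y. eval f (m # xs) (Suc y))
          \<Longrightarrow> eval (Mn f) xs n"

definition re_set :: "nat set \<Rightarrow> bool" where
  "re_set A \<longleftrightarrow> (\<exists>f. A = {x. \<exists>y. eval f [x] y})"

definition re_form_set :: "form set \<Rightarrow> bool" where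
  "re_form_set \<Phi> \<longleftrightarrow> re_set (code ` \<Phi>)"

end

theory Submission
  imports Defs
begin


inductive_cases ZfE: "eval Zf xs y"
inductive_cases SfE: "eval Sf xs y"
inductive_cases ProjE: "eval (Proj i) xs y"
inductive_cases CompE: "eval (Comp f gs) xs y"
inductive_cases PrimE: "eval (Prim f g) xs y"
inductive_cases MnE: "eval (Mn f) xs y"

lemma eval_det: "eval f xs y \<Longrightarrow> eval f xs y' \<Longrightarrow> y = y'"
proof (induction arbitrary: y' rule: eval.induct)
  case (ev_Z xs)
  then show ?case by (rule ZfE) simp
next
  case (ev_S x xs)
  then show ?case by (rule SfE) simp
next
  case (ev_Proj i xs)
  then show ?case using ev_Proj.prems by (auto elim: ProjE)
next
  case (ev_Comp ys gs xs f z)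
  from ev_Comp.prems obtain ys' where l: "length ys' = length gs"
    and a: "\<forall>i<length gs. eval (gs ! i) xs (ys' ! i)" and e: "eval f ys' y'"
    by (rule CompE) simp
  have "ys = ys'"
  proof (rule nth_equalityI)
    show "length ys = length ys'" using ev_Comp.hyps(1) l by simp
    fix i assume "i < length ys"
    then have i: "i < length gs" using ev_Comp.hyps(1) by simp
    with a have "eval (gs ! i) xs (ys' ! i)" by blast
    with i ev_Comp.IH(1) show "ys ! i = ys' ! i" by blast
  qed
  then show ?case using ev_Comp.IH(2) e by blast
next
  case (ev_Prim0 f xs y)
  from ev_Prim0.prems show ?case
    by (rule PrimE) (use ev_Prim0.IH in auto)
next
  case (ev_PrimS f g n xs y z)
  from ev_PrimS.prems show ?case
    by (rule PrimE) (use ev_PrimS.IH in auto)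
next
  case (ev_Mn f n xs)
  from ev_Mn.prems obtain n' where y': "y' = n'" and e: "eval f (n' # xs) 0"
    and lt: "\<forall>m<n'. \<exists>y. eval f (m # xs) (Suc y)"
    by (rule MnE) simp
  show ?case
  proof (rule ccontr)
    assume "n \<noteq> y'"
    then consider "n < n'" | "n' < n" using y' by linarith
    then show False
    proof cases
      case 1
      then obtain y where "eval f (n # xs) (Suc y)" using lt by blast
      with ev_Mn.IH(1) show False by fastforce
    next
      case 2
      then obtain y where "eval f (n' # xs) (Suc y) \<and> (\<forall>y'. eval f (n' # xs) y' \<longrightarrow> Suc y = y')"
        using ev_Mn.IH(2) by blast
      with e show False by fastforce
    qed
  qed
qed


datatype aexp = V nat | C nat | Plus aexp aexp | Times aexp aexp | Monus aexp aexp
  | Sum aexp aexp | Prod aexp aexp | Rec aexp aexp aexp | Call aexp "aexp list"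

fun aval :: "aexp \<Rightarrow> nat list \<Rightarrow> nat" where
  "aval (V i) xs = xs ! i"
| "aval (C c) xs = c"
| "aval (Plus a b) xs = aval a xs + aval b xs"
| "aval (Times a b) xs = aval a xs * aval b xs"
| "aval (Monus a b) xs = aval a xs - aval b xs"
| "aval (Sum b e) xs = (\<Sum>u<aval b xs. aval e (u # xs))"
| "aval (Prod b e) xs = (\<Prod>u<aval b xs. aval e (u # xs))"
| "aval (Rec n b s) xs = rec_nat (aval b xs) (\<lambda>j acc. aval s (acc # j # xs)) (aval n xs)"
| "aval (Call f es) xs = aval f (map (\<lambda>e. aval e xs) es)"

fun closed :: "nat \<Rightarrow> aexp \<Rightarrow> bool" where
  "closed k (V i) = (i < k)"
| "closed k (C c) = True"
| "closed k (Plus a b) = (closed k a \<and> closed k b)"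
| "closed k (Times a b) = (closed k a \<and> closed k b)"
| "closed k (Monus a b) = (closed k a \<and> closed k b)"
| "closed k (Sum b e) = (closed k b \<and> closed (Suc k) e)"
| "closed k (Prod b e) = (closed k b \<and> closed (Suc k) e)"
| "closed k (Rec n b s) = (closed k n \<and> closed k b \<and> closed (Suc (Suc k)) s)"
| "closed k (Call f es) = (closed (length es) f \<and> (\<forall>e\<in>set es. closed k e))"

fun cst :: "nat \<Rightarrow> recf" where
  "cst 0 = Zf"
| "cst (Suc c) = Comp Sf [cst c]"

lemma eval_cst: "eval (cst c) xs c"
proof (induction c)
  case 0 then show ?case by (simp add: ev_Z)
next
  case (Suc c)
  show ?case unfolding cst.simps by (rule ev_Comp[where ys="[c]"]) (use Suc in \<open>auto intro: ev_S\<close>)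
qed

lemma ev_Proj': "i < length xs \<Longrightarrow> y = xs ! i \<Longrightarrow> eval (Proj i) xs y"
  using ev_Proj by simp

lemma eval_Comp1: "eval g xs y \<Longrightarrow> eval f [y] z \<Longrightarrow> eval (Comp f [g]) xs z"
  by (rule ev_Comp[where ys="[y]"]) auto

lemma eval_Comp2: "eval g1 xs y1 \<Longrightarrow> eval g2 xs y2 \<Longrightarrow> eval f [y1, y2] z \<Longrightarrow> eval (Comp f [g1, g2]) xs z"
  by (rule ev_Comp[where ys="[y1, y2]"]) (auto simp: less_Suc_eq nth_Cons')

lemma eval_Prim_rec:
  assumes "eval f xs b" and "\<And>j acc. eval g (acc # j # xs) (G j acc)"
  shows "eval (Prim f g) (n # xs) (rec_nat b G n)"
proof (induction n)
  case 0 then show ?case using assms(1) by (simp add: ev_Prim0)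
next
  case (Suc n) then show ?case using assms(2) by (simp add: ev_PrimS)
qed

definition ADD :: recf where "ADD = Prim (Proj 0) (Comp Sf [Proj 0])"
definition MUL :: recf where "MUL = Prim Zf (Comp ADD [Proj 0, Proj 2])"
definition PRED :: recf where "PRED = Prim Zf (Proj 1)"
definition MONUS' :: recf where "MONUS' = Prim (Proj 0) (Comp PRED [Proj 0])"
definition MONUS :: recf where "MONUS = Comp MONUS' [Proj 1, Proj 0]"

lemma rec_nat_add: "rec_nat y (\<lambda>j acc. Suc acc) n = n + y"
  by (induction n) auto

lemma eval_ADD: "eval ADD [x, y] (x + y)"
proof -
  have "eval ADD [x, y] (rec_nat y (\<lambda>j acc. Suc acc) x)"
    unfolding ADD_def
    by (rule eval_Prim_rec) (auto intro!: ev_Proj' eval_Comp1 ev_S)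
  then show ?thesis by (simp add: rec_nat_add)
qed

lemma rec_nat_mul: "rec_nat 0 (\<lambda>j acc. acc + y) n = n * y"
  by (induction n) auto

lemma eval_MUL: "eval MUL [x, y] (x * y)"
proof -
  have "eval MUL [x, y] (rec_nat 0 (\<lambda>j acc. acc + y) x)"
    unfolding MUL_def
    by (rule eval_Prim_rec) (auto intro!: ev_Z eval_Comp2 ev_Proj eval_ADD)
  then show ?thesis by (simp add: rec_nat_mul)
qed

lemma rec_nat_pred: "rec_nat 0 (\<lambda>j acc. j) n = n - 1"
  by (induction n) auto

lemma eval_PRED: "eval PRED [x] (x - 1)"
proof -
  have "eval PRED [x] (rec_nat 0 (\<lambda>j acc. j) x)"
    unfolding PRED_def
    by (rule eval_Prim_rec) (auto intro!: ev_Z ev_Proj')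
  then show ?thesis by (simp add: rec_nat_pred)
qed

lemma eval_PRED2: "eval PRED [x] (x - Suc 0)"
  using eval_PRED by simp

lemma rec_nat_monus: "rec_nat x (\<lambda>j acc. acc - Suc 0) n = x - n"
  by (induction n) auto

lemma eval_MONUS: "eval MONUS [x, y] (x - y)"
proof -
  have "eval MONUS' [y, x] (rec_nat x (\<lambda>j acc. acc - Suc 0) y)"
    unfolding MONUS'_def
    by (rule eval_Prim_rec) (auto intro!: ev_Proj' eval_Comp1 eval_PRED2)
  then have "eval MONUS' [y, x] (x - y)" by (simp add: rec_nat_monus)
  then show ?thesis unfolding MONUS_def
    by (auto intro!: eval_Comp2 ev_Proj)
qed

lemma eval_Comp_list:
  assumes "length ys = length gs" "\<And>i. i < length gs \<Longrightarrow> eval (gs ! i) xs (ys ! i)" "eval f ys z"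
  shows "eval (Comp f gs) xs z"
  using assms by (intro ev_Comp) auto

lemma eval_Comp_projs:
  assumes "eval f (drop d xs) z" "length xs = d + k"
  shows "eval (Comp f (map Proj [d..<d + k])) xs z"
  by (rule eval_Comp_list[where ys="drop d xs"]) (use assms in \<open>auto intro!: ev_Proj'\<close>)

lemma eval_Comp_head_projs:
  assumes "eval g xs y" "eval f (y # xs) z" "length xs = k"
  shows "eval (Comp f (g # map Proj [0..<k])) xs z"
  by (rule eval_Comp_list[where ys="y # xs"])
     (use assms in \<open>auto intro!: ev_Proj' simp: nth_Cons' less_Suc_eq_0_disj\<close>)

fun compile :: "nat \<Rightarrow> aexp \<Rightarrow> recf" where
  "compile k (V i) = Proj i"
| "compile k (C c) = cst c"
| "compile k (Plus a b) = Comp ADD [compile k a, compile k b]"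
| "compile k (Times a b) = Comp MUL [compile k a, compile k b]"
| "compile k (Monus a b) = Comp MONUS [compile k a, compile k b]"
| "compile k (Sum b e) = Comp (Prim Zf (Comp ADD [Proj 0, Comp (compile (Suc k) e) (map Proj [1..<1 + Suc k])]))
      (compile k b # map Proj [0..<k])"
| "compile k (Prod b e) = Comp (Prim (cst 1) (Comp MUL [Proj 0, Comp (compile (Suc k) e) (map Proj [1..<1 + Suc k])]))
      (compile k b # map Proj [0..<k])"
| "compile k (Rec n b s) = Comp (Prim (compile k b) (compile (Suc (Suc k)) s)) (compile k n # map Proj [0..<k])"
| "compile k (Call f es) = Comp (compile (length es) f) (map (compile k) es)"

lemma rec_nat_sum: "rec_nat 0 (\<lambda>j acc. acc + f j) n = (\<Sum>u<n. f u)"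
  by (induction n) auto

lemma rec_nat_prod: "rec_nat 1 (\<lambda>j acc. acc * f j) n = (\<Prod>u<n. f u)"
  by (induction n) auto

lemma compile_correct: "closed k e \<Longrightarrow> length xs = k \<Longrightarrow> eval (compile k e) xs (aval e xs)"
proof (induction e arbitrary: k xs)
  case (V i) then show ?case by (auto intro: ev_Proj')
next
  case (C c) then show ?case by (simp add: eval_cst)
next
  case (Plus a b) then show ?case by (auto intro!: eval_Comp2 eval_ADD)
next
  case (Times a b) then show ?case by (auto intro!: eval_Comp2 eval_MUL)
next
  case (Monus a b) then show ?case by (auto intro!: eval_Comp2 eval_MONUS)
next
  case (Sum b e)
  let ?P = "Prim Zf (Comp ADD [Proj 0, Comp (compile (Suc k) e) (map Proj [1..<1 + Suc k])])"
  have "eval ?P (n # xs) (rec_nat 0 (\<lambda>j acc. acc + aval e (j # xs)) n)" for n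
  proof (rule eval_Prim_rec)
    show "eval Zf xs 0" by (rule ev_Z)
    fix j acc
    have "eval (Comp (compile (Suc k) e) (map Proj [1..<1 + Suc k])) (acc # j # xs) (aval e (j # xs))"
      by (rule eval_Comp_projs) (use Sum in auto)
    then show "eval (Comp ADD [Proj 0, Comp (compile (Suc k) e) (map Proj [1..<1 + Suc k])])
        (acc # j # xs) (acc + aval e (j # xs))"
      by (auto intro!: eval_Comp2 eval_ADD ev_Proj)
  qed
  then have "eval ?P (aval b xs # xs) (aval (Sum b e) xs)" by (simp only: rec_nat_sum aval.simps)
  then show ?case unfolding compile.simps
    by (intro eval_Comp_head_projs[where y="aval b xs"]) (use Sum in auto)
next
  case (Prod b e)
  let ?P = "Prim (cst 1) (Comp MUL [Proj 0, Comp (compile (Suc k) e) (map Proj [1..<1 + Suc k])])"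
  have "eval ?P (n # xs) (rec_nat 1 (\<lambda>j acc. acc * aval e (j # xs)) n)" for n
  proof (rule eval_Prim_rec)
    show "eval (cst 1) xs 1" by (rule eval_cst)
    fix j acc
    have "eval (Comp (compile (Suc k) e) (map Proj [1..<1 + Suc k])) (acc # j # xs) (aval e (j # xs))"
      by (rule eval_Comp_projs) (use Prod in auto)
    then show "eval (Comp MUL [Proj 0, Comp (compile (Suc k) e) (map Proj [1..<1 + Suc k])])
        (acc # j # xs) (acc * aval e (j # xs))"
      by (auto intro!: eval_Comp2 eval_MUL ev_Proj)
  qed
  then have "eval ?P (aval b xs # xs) (aval (Prod b e) xs)" by (simp only: rec_nat_prod aval.simps)
  then show ?case unfolding compile.simps
    by (intro eval_Comp_head_projs[where y="aval b xs"]) (use Prod in auto)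
next
  case (Rec n b s)
  have "eval (Prim (compile k b) (compile (Suc (Suc k)) s)) (m # xs)
     (rec_nat (aval b xs) (\<lambda>j acc. aval s (acc # j # xs)) m)" for m
    by (rule eval_Prim_rec) (use Rec in auto)
  then have "eval (Prim (compile k b) (compile (Suc (Suc k)) s)) (aval n xs # xs) (aval (Rec n b s) xs)"
    by simp
  then show ?case unfolding compile.simps
    by (intro eval_Comp_head_projs[where y="aval n xs"]) (use Rec in auto)
next
  case (Call f es)
  show ?case
  proof (simp, rule eval_Comp_list[where ys="map (\<lambda>e. aval e xs) es"])
    show "eval (compile (length es) f) (map (\<lambda>e. aval e xs) es) (aval f (map (\<lambda>e. aval e xs) es))"
      using Call by simp
    fix i assume "i < length (map (compile k) es)"
    then show "eval (map (compile k) es ! i) xs (map (\<lambda>e. aval e xs) es ! i)"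
      using Call by auto
  qed simp
qed

lemma re_set_aexp:
  assumes "closed 2 e"
  shows "re_set {x. \<exists>m. aval e [m, x] = 0}"
proof -
  let ?c = "compile 2 e"
  have ev: "eval ?c [m, x] (aval e [m, x])" for m x
    by (rule compile_correct) (use assms in auto)
  have "{x. \<exists>m. aval e [m, x] = 0} = {x. \<exists>y. eval (Mn ?c) [x] y}"
  proof (intro set_eqI iffI; simp)
    fix x assume "\<exists>m. aval e [m, x] = 0"
    then obtain m where m: "aval e [m, x] = 0" by blast
    define n where "n = (LEAST m. aval e [m, x] = 0)"
    have n: "aval e [n, x] = 0" unfolding n_def by (rule LeastI, rule m)
    have "\<forall>m'<n. \<exists>y. eval ?c (m' # [x]) (Suc y)"
    proof (intro allI impI)
      fix m' assume "m' < n"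
      then have "aval e [m', x] \<noteq> 0" unfolding n_def using not_less_Least by blast
      then obtain y where "aval e [m', x] = Suc y" using not0_implies_Suc by blast
      then show "\<exists>y. eval ?c (m' # [x]) (Suc y)" using ev[of m' x] by auto
    qed
    then have "eval (Mn ?c) [x] n" using ev[of n x] n by (auto intro: ev_Mn)
    then show "\<exists>y. eval (Mn ?c) [x] y" by blast
  next
    fix x assume "\<exists>y. eval (Mn ?c) [x] y"
    then obtain y where "eval (Mn ?c) [x] y" by blast
    then have "eval ?c [y, x] 0" by (auto elim: MnE)
    then have "aval e [y, x] = 0" using ev[of y x] eval_det by blast
    then show "\<exists>m. aval e [m, x] = 0" by blast
  qed
  then show ?thesis unfolding re_set_def by blast
qed


definition sgE :: "aexp \<Rightarrow> aexp" where "sgE e = Monus (C 1) (Monus (C 1) e)"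
definition nsgE :: "aexp \<Rightarrow> aexp" where "nsgE e = Monus (C 1) e"
definition eqE :: "aexp \<Rightarrow> aexp \<Rightarrow> aexp" where "eqE a b = nsgE (Plus (Monus a b) (Monus b a))"
definition leE :: "aexp \<Rightarrow> aexp \<Rightarrow> aexp" where "leE a b = nsgE (Monus a b)"
definition ltE :: "aexp \<Rightarrow> aexp \<Rightarrow> aexp" where "ltE a b = sgE (Monus b a)"

lemma aval_sgE[simp]: "aval (sgE e) xs = (if aval e xs = 0 then 0 else 1)"
  by (simp add: sgE_def)
lemma aval_nsgE[simp]: "aval (nsgE e) xs = (if aval e xs = 0 then 1 else 0)"
  by (simp add: nsgE_def)
lemma aval_eqE[simp]: "aval (eqE a b) xs = (if aval a xs = aval b xs then 1 else 0)"
  by (simp add: eqE_def)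
lemma aval_leE[simp]: "aval (leE a b) xs = (if aval a xs \<le> aval b xs then 1 else 0)"
  by (simp add: leE_def)
lemma aval_ltE[simp]: "aval (ltE a b) xs = (if aval a xs < aval b xs then 1 else 0)"
  by (simp add: ltE_def)

lemma closed_sgE[simp]: "closed k (sgE e) = closed k e" by (simp add: sgE_def)
lemma closed_nsgE[simp]: "closed k (nsgE e) = closed k e" by (simp add: nsgE_def)
lemma closed_eqE[simp]: "closed k (eqE a b) = (closed k a \<and> closed k b)" by (auto simp add: eqE_def)
lemma closed_leE[simp]: "closed k (leE a b) = (closed k a \<and> closed k b)" by (auto simp add: leE_def)
lemma closed_ltE[simp]: "closed k (ltE a b) = (closed k a \<and> closed k b)" by (auto simp add: ltE_def)

lemma sum_ind: "(\<Sum>u<(N::nat). if P u then 1 else 0::nat) = card {u. u < N \<and> P u}"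
proof -
  have "card {u \<in> {..<N}. P u} = (\<Sum>u\<in>{u \<in> {..<N}. P u}. 1)" by simp
  also have "\<dots> = (\<Sum>u<N. if P u then 1 else 0)" by (rule sum.inter_filter) auto
  finally show ?thesis by simp
qed


lemma sum_ind_0: "((\<Sum>u<(N::nat). if P u then 1 else 0::nat) = 0) = (\<not>(\<exists>u<N. P u))"
proof -
  have "finite {u. u < N \<and> P u}" by simp
  then show ?thesis by (auto simp: sum_ind card_eq_0_iff)
qed

definition PEx :: aexp where
  "PEx = Plus (Sum (Plus (Plus (V 0) (V 1)) (C 1)) (V 0)) (V 0)"

lemma sum_triangle: "\<Sum>{..<s} + s = triangle s"
  by (induction s) auto

lemma aval_PEx[simp]: "aval PEx [a, b] = prod_encode (a, b)"
  unfolding PEx_def prod_encode_def by (simp add: sum_triangle)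

lemma closed_PEx[simp]: "closed (Suc (Suc 0)) PEx" by (simp add: PEx_def)

definition peE :: "aexp \<Rightarrow> aexp \<Rightarrow> aexp" where "peE a b = Call PEx [a, b]"
lemma aval_peE[simp]: "aval (peE a b) xs = prod_encode (aval a xs, aval b xs)"
  by (simp add: peE_def)
lemma closed_peE[simp]: "closed k (peE a b) = (closed k a \<and> closed k b)"
  by (simp add: peE_def)

definition FSTx :: aexp where
  "FSTx = Sum (Plus (V 0) (C 1)) (Times (V 0) (sgE (Sum (Plus (V 1) (C 1)) (eqE (Call PEx [V 1, V 0]) (V 2)))))"
definition SNDx :: aexp where
  "SNDx = Sum (Plus (V 0) (C 1)) (Times (V 0) (sgE (Sum (Plus (V 1) (C 1)) (eqE (Call PEx [V 0, V 1]) (V 2)))))"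

lemma sum_single: "a0 < N \<Longrightarrow> (\<Sum>a<N. a * (if a = a0 then 1 else 0::nat)) = a0"
proof -
  assume "a0 < N"
  have "(\<Sum>a<N. a * (if a = a0 then 1 else 0::nat)) = (\<Sum>a<N. if a = a0 then a else 0)"
    by (rule sum.cong) auto
  also have "\<dots> = a0" using \<open>a0 < N\<close> by (simp add: sum.delta)
  finally show ?thesis .
qed

lemma aval_FSTx[simp]: "aval FSTx [m] = fst (prod_decode m)"
proof -
  obtain a0 b0 where d: "prod_decode m = (a0, b0)" by fastforce
  then have m: "m = prod_encode (a0, b0)" by (metis prod_decode_inverse)
  have "a0 \<le> m" "b0 \<le> m" using m le_prod_encode_1 le_prod_encode_2 by auto
  have inner: "(if (\<Sum>b<Suc m. if prod_encode (a, b) = m then 1 else 0::nat) = 0 then 0 else 1)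
       = (if a = a0 then 1 else 0)" for a
  proof -
    have "(\<exists>b<Suc m. prod_encode (a, b) = m) = (a = a0)"
      using m \<open>b0 \<le> m\<close> by auto
    then show ?thesis by (simp only: sum_ind_0) simp
  qed
  have "aval FSTx [m] = (\<Sum>a<Suc m. a * (if (\<Sum>b<Suc m. if prod_encode (a, b) = m then 1 else 0::nat) = 0 then 0 else 1))"
    unfolding FSTx_def by simp
  also have "\<dots> = (\<Sum>a<Suc m. a * (if a = a0 then 1 else 0))" by (simp only: inner)
  also have "\<dots> = a0" using \<open>a0 \<le> m\<close> by (intro sum_single) simp
  finally show ?thesis using d by simp
qed

lemma aval_SNDx[simp]: "aval SNDx [m] = snd (prod_decode m)"
proof -
  obtain a0 b0 where d: "prod_decode m = (a0, b0)" by fastforce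
  then have m: "m = prod_encode (a0, b0)" by (metis prod_decode_inverse)
  have "a0 \<le> m" "b0 \<le> m" using m le_prod_encode_1 le_prod_encode_2 by auto
  have inner: "(if (\<Sum>a<Suc m. if prod_encode (a, b) = m then 1 else 0::nat) = 0 then 0 else 1)
       = (if b = b0 then 1 else 0)" for b
  proof -
    have "(\<exists>a<Suc m. prod_encode (a, b) = m) = (b = b0)"
      using m \<open>a0 \<le> m\<close> by auto
    then show ?thesis by (simp only: sum_ind_0) simp
  qed
  have "aval SNDx [m] = (\<Sum>b<Suc m. b * (if (\<Sum>a<Suc m. if prod_encode (a, b) = m then 1 else 0::nat) = 0 then 0 else 1))"
    unfolding SNDx_def by simp
  also have "\<dots> = (\<Sum>b<Suc m. b * (if b = b0 then 1 else 0))" by (simp only: inner)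
  also have "\<dots> = b0" using \<open>b0 \<le> m\<close> by (intro sum_single) simp
  finally show ?thesis using d by simp
qed

lemma closed_FSTx[simp]: "closed (Suc 0) FSTx" by (simp add: FSTx_def)
lemma closed_SNDx[simp]: "closed (Suc 0) SNDx" by (simp add: SNDx_def)

definition fstE :: "aexp \<Rightarrow> aexp" where "fstE a = Call FSTx [a]"
definition sndE :: "aexp \<Rightarrow> aexp" where "sndE a = Call SNDx [a]"
lemma aval_fstE[simp]: "aval (fstE a) xs = fst (prod_decode (aval a xs))" by (simp add: fstE_def)
lemma aval_sndE[simp]: "aval (sndE a) xs = snd (prod_decode (aval a xs))" by (simp add: sndE_def)
lemma closed_fstE[simp]: "closed k (fstE a) = closed k a" by (simp add: fstE_def)
lemma closed_sndE[simp]: "closed k (sndE a) = closed k a" by (simp add: sndE_def)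

definition DIVx :: aexp where "DIVx = Sum (V 0) (leE (Times (Plus (V 0) (C 1)) (V 2)) (V 1))"

lemma aval_DIVx[simp]: "0 < d \<Longrightarrow> aval DIVx [n, d] = n div d"
proof -
  assume d: "0 < d"
  have key: "((q + 1) * d \<le> n) = (q < n div d)" for q
  proof -
    have 1: "(q + 1 \<le> n div d) = ((q + 1) * d \<le> n)" by (rule less_eq_div_iff_mult_less_eq[OF d])
    have 2: "(q + 1 \<le> n div d) = (q < n div d)" by linarith
    from 1 2 show ?thesis by (simp only:)
  qed
  have key2: "(d + q * d \<le> n) = (q < n div d)" for q using key[of q] by (simp add: algebra_simps)
  have "aval DIVx [n, d] = (\<Sum>q<n. if q < n div d then 1 else 0)"
    unfolding DIVx_def by (simp add: key key2)
  also have "\<dots> = card {q. q < n \<and> q < n div d}" by (rule sum_ind)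
  also have "{q. q < n \<and> q < n div d} = {q. q < n div d}"
    by (auto intro: less_le_trans[OF _ div_le_dividend])
  finally show ?thesis by simp
qed

lemma closed_DIVx[simp]: "closed (Suc (Suc 0)) DIVx" by (simp add: DIVx_def)

definition POW2x :: aexp where "POW2x = Prod (V 0) (C 2)"
lemma aval_POW2x[simp]: "aval POW2x [x] = 2 ^ x" by (simp add: POW2x_def)
lemma closed_POW2x[simp]: "closed (Suc 0) POW2x" by (simp add: POW2x_def)

definition BITx :: aexp where
  "BITx = Monus (Call DIVx [V 1, Call POW2x [V 0]])
     (Times (C 2) (Call DIVx [Call DIVx [V 1, Call POW2x [V 0]], C 2]))"

lemma aval_BITx[simp]: "aval BITx [x, r] = (if x \<in> set_decode r then 1 else 0)"
proof -
  have "aval BITx [x, r] = r div 2 ^ x - 2 * (r div 2 ^ x div 2)"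
    unfolding BITx_def by simp
  also have "\<dots> = (r div 2 ^ x) mod 2" using div_mult_mod_eq[of "r div 2 ^ x" 2] by linarith
  also have "\<dots> = (if odd (r div 2 ^ x) then 1 else 0)" by (simp add: mod2_eq_if)
  finally show ?thesis by (simp add: set_decode_def)
qed
lemma closed_BITx[simp]: "closed (Suc (Suc 0)) BITx" by (simp add: BITx_def)

definition memE :: "aexp \<Rightarrow> aexp \<Rightarrow> aexp" where "memE x r = Call BITx [x, r]"
lemma aval_memE[simp]: "aval (memE a b) xs = (if aval a xs \<in> set_decode (aval b xs) then 1 else 0)"
  by (simp add: memE_def)
lemma closed_memE[simp]: "closed k (memE a b) = (closed k a \<and> closed k b)"
  by (simp add: memE_def)

definition sumL :: "aexp list \<Rightarrow> aexp" where "sumL es = foldr Plus es (C 0)"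
lemma aval_sumL[simp]: "aval (sumL es) xs = sum_list (map (\<lambda>e. aval e xs) es)"
  unfolding sumL_def by (induction es) auto
lemma closed_sumL[simp]: "closed k (sumL es) = (\<forall>e\<in>set es. closed k e)"
  unfolding sumL_def by (induction es) auto


lemma inj_code: "inj code"
proof (rule injI)
  fix x y show "code x = code y \<Longrightarrow> x = y"
  proof (induction x arbitrary: y)
    case Top then show ?case by (cases y) auto
  next
    case (Prop p) then show ?case by (cases y) auto
  next
    case (Neg x) then show ?case by (cases y) auto
  next
    case (And x1 x2) then show ?case by (cases y) auto
  next
    case (Dia a k x) then show ?case by (cases y) auto
  qed
qed

lemma inv_code[simp]: "inv code (code x) = x"
  using inj_code by simp

lemma code_eq_iff[simp]: "code x = code y \<longleftrightarrow> x = y"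
  using inj_code by (auto dest: injD)

lemma set_conj_set_list: "finite S \<Longrightarrow> set (map (inv code) (sorted_list_of_set (code ` S))) = S"
  by (simp add: image_image)

lemma sat_conj_list: "sat M w (conj_list xs) = (\<forall>\<psi>\<in>set xs. sat M w \<psi>)"
  by (induction xs rule: conj_list.induct) auto

lemma wff_conj_list: "(\<forall>\<psi>\<in>set xs. wff P I \<psi>) \<Longrightarrow> wff P I (conj_list xs)"
  by (induction xs rule: conj_list.induct) auto

lemma sat_conj_set: "finite S \<Longrightarrow> sat M w (conj_set S) = (\<forall>\<psi>\<in>S. sat M w \<psi>)"
  unfolding conj_set_def by (simp add: sat_conj_list set_conj_set_list del: set_map)

lemma wff_conj_set: "finite S \<Longrightarrow> (\<forall>\<psi>\<in>S. wff P I \<psi>) \<Longrightarrow> wff P I (conj_set S)"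
  unfolding conj_set_def by (rule wff_conj_list) (simp add: set_conj_set_list del: set_map)

lemma sat_Dia_eq: "sat M w (Dia_eq \<alpha> k \<phi>) = (card {v \<in> nbh M \<alpha> w. sat M v \<phi>} = k)"
  by (auto simp: Dia_eq_def)

lemma wff_Dia_eq[simp]: "wff P I (Dia_eq \<alpha> k \<phi>) = (\<alpha> \<in> I \<and> wff P I \<phi>)"
  by (auto simp: Dia_eq_def)

definition lits :: "nat set \<Rightarrow> 'w kmodel \<Rightarrow> 'w \<Rightarrow> form set" where
  "lits P M w = {Prop p | p. p \<in> P \<and> w \<in> Val M p} \<union> {Neg (Prop p) | p. p \<in> P \<and> w \<notin> Val M p}"

lemma type_eps_lits: "type_eps P M w = conj_set (lits P M w)"
  by (simp add: type_eps_def lits_def)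

lemma finite_lits: "finite P \<Longrightarrow> finite (lits P M w)"
  unfolding lits_def by auto

lemma sat_type_eps_iff: "finite P \<Longrightarrow> sat M' w' (type_eps P M w) = (\<forall>p\<in>P. w' \<in> Val M' p \<longleftrightarrow> w \<in> Val M p)"
proof -
  assume P: "finite P"
  have "sat M' w' (type_eps P M w) = (\<forall>\<psi>\<in>lits P M w. sat M' w' \<psi>)"
    by (simp add: type_eps_lits sat_conj_set finite_lits P)
  also have "\<dots> = (\<forall>p\<in>P. w' \<in> Val M' p \<longleftrightarrow> w \<in> Val M p)"
  proof
    assume h: "\<forall>\<psi>\<in>lits P M w. sat M' w' \<psi>"
    show "\<forall>p\<in>P. w' \<in> Val M' p \<longleftrightarrow> w \<in> Val M p"
    proof
      fix p assume p: "p \<in> P"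
      show "w' \<in> Val M' p \<longleftrightarrow> w \<in> Val M p"
      proof (cases "w \<in> Val M p")
        case True
        then have "Prop p \<in> lits P M w" using p unfolding lits_def by blast
        then show ?thesis using h True by fastforce
      next
        case False
        then have "Neg (Prop p) \<in> lits P M w" using p unfolding lits_def by blast
        then show ?thesis using h False by fastforce
      qed
    qed
  next
    assume h: "\<forall>p\<in>P. w' \<in> Val M' p \<longleftrightarrow> w \<in> Val M p"
    show "\<forall>\<psi>\<in>lits P M w. sat M' w' \<psi>"
      using h unfolding lits_def by auto
  qed
  finally show ?thesis .
qed

lemma sat_type_eps: "finite P \<Longrightarrow> sat M w (type_eps P M w)"
  by (simp add: sat_type_eps_iff)

lemma type_eps_eq: "finite P \<Longrightarrow> sat M' w' (type_eps P M w) \<Longrightarrow> type_eps P M' w' = type_eps P M w"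
proof -
  assume P: "finite P" and s: "sat M' w' (type_eps P M w)"
  then have "\<forall>p\<in>P. w' \<in> Val M' p \<longleftrightarrow> w \<in> Val M p" by (simp add: sat_type_eps_iff)
  then have "lits P M' w' = lits P M w" unfolding lits_def by blast
  then show ?thesis by (simp add: type_eps_lits)
qed

lemma wff_type_eps: "finite P \<Longrightarrow> wff P I (type_eps P M w)"
  unfolding type_eps_lits by (rule wff_conj_set) (auto simp: finite_lits lits_def)

definition cnt :: "('w \<Rightarrow> form) \<Rightarrow> 'w kmodel \<Rightarrow> nat \<Rightarrow> 'w \<Rightarrow> form \<Rightarrow> nat" where
  "cnt \<sigma> M \<alpha> w s = card {u \<in> nbh M \<alpha> w. \<sigma> u = s}"

fun ctype :: "nat set \<Rightarrow> nat set \<Rightarrow> nat \<Rightarrow> 'w kmodel \<Rightarrow> 'w \<Rightarrow> form" where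
  "ctype P I 0 M w = type_eps P M w"
| "ctype P I (Suc n) M w = conj_set ({type_eps P M w}
     \<union> (\<lambda>(\<alpha>, v). Dia_eq \<alpha> (cnt (ctype P I n M) M \<alpha> w (ctype P I n M v)) (ctype P I n M v)) ` (SIGMA \<alpha>:I. nbh M \<alpha> w)
     \<union> (\<lambda>\<alpha>. Dia_eq \<alpha> (card (nbh M \<alpha> w)) Top) ` I)"

definition fnb :: "nat set \<Rightarrow> 'w kmodel \<Rightarrow> bool" where
  "fnb I M \<longleftrightarrow> (\<forall>\<alpha>\<in>I. \<forall>w. finite (nbh M \<alpha> w))"

lemma ctype_set_finite:
  "finite I \<Longrightarrow> fnb I M \<Longrightarrow> finite ({type_eps P M w}
     \<union> (\<lambda>(\<alpha>, v). Dia_eq \<alpha> (cnt (ctype P I n M) M \<alpha> w (ctype P I n M v)) (ctype P I n M v)) ` (SIGMA \<alpha>:I. nbh M \<alpha> w)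
     \<union> (\<lambda>\<alpha>. Dia_eq \<alpha> (card (nbh M \<alpha> w)) Top) ` I)"
  by (auto simp: fnb_def intro!: finite_SigmaI)

lemma wff_ctype: "finite P \<Longrightarrow> finite I \<Longrightarrow> fnb I M \<Longrightarrow> wff P I (ctype P I n M w)"
proof (induction n arbitrary: w)
  case 0 then show ?case by (simp add: wff_type_eps)
next
  case (Suc n)
  show ?case unfolding ctype.simps
    by (rule wff_conj_set[OF ctype_set_finite[OF Suc.prems(2,3)]]) (use Suc in \<open>auto simp: wff_type_eps\<close>)
qed

lemma fiber_lemma:
  fixes g :: "'a \<Rightarrow> 'c" and h :: "'b \<Rightarrow> 'c"
  assumes A: "finite A" and B: "finite B" and card: "card B = card A"
    and eq: "\<And>a. a \<in> A \<Longrightarrow> card {b \<in> B. h b = g a} = card {a' \<in> A. g a' = g a}"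
  shows "\<And>s. card {b \<in> B. h b = s} = card {a \<in> A. g a = s}"
    and "h ` B = g ` A"
proof -
  have disj: "\<forall>s\<in>g ` A. \<forall>t\<in>g ` A. s \<noteq> t \<longrightarrow> {b \<in> B. h b = s} \<inter> {b \<in> B. h b = t} = {}" by auto
  have "card (\<Union>s\<in>g ` A. {b \<in> B. h b = s}) = (\<Sum>s\<in>g ` A. card {b \<in> B. h b = s})"
    by (rule card_UN_disjoint) (use A B disj in auto)
  also have "\<dots> = (\<Sum>s\<in>g ` A. card {a \<in> A. g a = s})"
    by (rule sum.cong) (use eq in auto)
  also have "\<dots> = card (\<Union>s\<in>g ` A. {a \<in> A. g a = s})"
    by (rule card_UN_disjoint[symmetric]) (use A in auto)
  also have "(\<Union>s\<in>g ` A. {a \<in> A. g a = s}) = A" by auto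
  finally have c: "card (\<Union>s\<in>g ` A. {b \<in> B. h b = s}) = card B" using card by simp
  have "(\<Union>s\<in>g ` A. {b \<in> B. h b = s}) = B"
    by (rule card_subset_eq[OF B _ c]) auto
  then have sub: "h ` B \<subseteq> g ` A" by auto
  show "card {b \<in> B. h b = s} = card {a \<in> A. g a = s}" for s
  proof (cases "s \<in> g ` A")
    case True
    then obtain a where "a \<in> A" "s = g a" by auto
    then show ?thesis using eq by simp
  next
    case False
    then have e: "{a \<in> A. g a = s} = {}" "{b \<in> B. h b = s} = {}" using sub by auto
    show ?thesis by (simp only: e card.empty)
  qed
  show "h ` B = g ` A"
  proof
    show "h ` B \<subseteq> g ` A" by (rule sub)
    show "g ` A \<subseteq> h ` B"
    proof
      fix s assume "s \<in> g ` A"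
      then obtain a where a: "a \<in> A" "s = g a" by auto
      then have "card {b \<in> B. h b = s} \<noteq> 0" using eq[of a] A by (auto simp: card_eq_0_iff)
      then obtain b where "b \<in> B" "h b = s" by (metis (mono_tags, lifting) card.empty empty_Collect_eq)
      then show "s \<in> h ` B" by auto
    qed
  qed
qed


lemma img_sigma: "(\<lambda>(\<alpha>, v). F \<alpha> (g v)) ` (SIGMA \<alpha>:I. S \<alpha>) = (\<Union>\<alpha>\<in>I. F \<alpha> ` (g ` S \<alpha>))"
  by auto

lemma ctype_main:
  assumes P: "finite P" and I: "finite I"
  shows "(\<forall>(M::'w kmodel) w. fnb I M \<longrightarrow> sat M w (ctype P I n M w)) \<and>
         (\<forall>(M::'w kmodel) (M'::'w kmodel) w w'. fnb I M \<longrightarrow> fnb I M' \<longrightarrow> sat M' w' (ctype P I n M w) \<longrightarrow> ctype P I n M' w' = ctype P I n M w)"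
proof (induction n)
  case 0
  show ?case using P by (simp add: sat_type_eps type_eps_eq)
next
  case (Suc n)
  have L1: "\<And>(M::'w kmodel) w. fnb I M \<Longrightarrow> sat M w (ctype P I n M w)" using Suc by blast
  have L2: "\<And>(M::'w kmodel) (M'::'w kmodel) w w'. fnb I M \<Longrightarrow> fnb I M' \<Longrightarrow> sat M' w' (ctype P I n M w) \<Longrightarrow> ctype P I n M' w' = ctype P I n M w"
    using Suc by blast
  have sat_iff: "sat M' u' (ctype P I n M v) = (ctype P I n M' u' = ctype P I n M v)"
    if "fnb I M" "fnb I M'" for M M' :: "'w kmodel" and u' v
    using L1[OF that(2), of u'] L2[OF that] by auto
  have cnt_sat: "card {u \<in> nbh M' \<alpha> w'. sat M' u (ctype P I n M v)} = cnt (ctype P I n M') M' \<alpha> w' (ctype P I n M v)"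
    if "fnb I M" "fnb I M'" for M M' :: "'w kmodel" and \<alpha> w' v
    unfolding cnt_def using sat_iff[OF that] by simp
  have A1: "sat M w (ctype P I (Suc n) M w)" if fM: "fnb I M" for M :: "'w kmodel" and w
  proof -
    have "\<forall>\<psi>\<in>({type_eps P M w}
     \<union> (\<lambda>(\<alpha>, v). Dia_eq \<alpha> (cnt (ctype P I n M) M \<alpha> w (ctype P I n M v)) (ctype P I n M v)) ` (SIGMA \<alpha>:I. nbh M \<alpha> w)
     \<union> (\<lambda>\<alpha>. Dia_eq \<alpha> (card (nbh M \<alpha> w)) Top) ` I). sat M w \<psi>"
      using P cnt_sat[OF fM fM] by (auto simp: sat_type_eps sat_Dia_eq)
    then show ?thesis unfolding ctype.simps by (simp only: sat_conj_set[OF ctype_set_finite[OF I fM]])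
  qed
  have A2: "ctype P I (Suc n) M' w' = ctype P I (Suc n) M w"
    if fM: "fnb I M" and fM': "fnb I M'" and s: "sat M' w' (ctype P I (Suc n) M w)" for M M' :: "'w kmodel" and w w'
  proof -
    define \<sigma> where "\<sigma> = ctype P I n M"
    define \<sigma>' where "\<sigma>' = ctype P I n M'"
    have all: "\<forall>\<psi>\<in>({type_eps P M w}
     \<union> (\<lambda>(\<alpha>, v). Dia_eq \<alpha> (cnt \<sigma> M \<alpha> w (\<sigma> v)) (\<sigma> v)) ` (SIGMA \<alpha>:I. nbh M \<alpha> w)
     \<union> (\<lambda>\<alpha>. Dia_eq \<alpha> (card (nbh M \<alpha> w)) Top) ` I). sat M' w' \<psi>"
      using s unfolding ctype.simps \<sigma>_def by (simp only: sat_conj_set[OF ctype_set_finite[OF I fM]])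
    have te: "type_eps P M' w' = type_eps P M w" using all P by (simp add: type_eps_eq)
    have fib: "card {b \<in> nbh M' \<alpha> w'. \<sigma>' b = s} = card {a \<in> nbh M \<alpha> w. \<sigma> a = s}"
      and img: "\<sigma>' ` nbh M' \<alpha> w' = \<sigma> ` nbh M \<alpha> w"
      and cd: "card (nbh M' \<alpha> w') = card (nbh M \<alpha> w)"
      if \<alpha>: "\<alpha> \<in> I" for \<alpha> s
    proof -
      have finA: "finite (nbh M \<alpha> w)" and finB: "finite (nbh M' \<alpha> w')" using fM fM' \<alpha> by (auto simp: fnb_def)
      have "sat M' w' (Dia_eq \<alpha> (card (nbh M \<alpha> w)) Top)" using all \<alpha> by blast
      then show c: "card (nbh M' \<alpha> w') = card (nbh M \<alpha> w)" by (simp add: sat_Dia_eq)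
      have e: "card {b \<in> nbh M' \<alpha> w'. \<sigma>' b = \<sigma> a} = card {a' \<in> nbh M \<alpha> w. \<sigma> a' = \<sigma> a}"
        if a: "a \<in> nbh M \<alpha> w" for a
      proof -
        have "Dia_eq \<alpha> (cnt \<sigma> M \<alpha> w (\<sigma> a)) (\<sigma> a)
           \<in> (\<lambda>(\<alpha>, v). Dia_eq \<alpha> (cnt \<sigma> M \<alpha> w (\<sigma> v)) (\<sigma> v)) ` (SIGMA \<alpha>:I. nbh M \<alpha> w)"
          by (rule image_eqI[where x="(\<alpha>, a)"]) (use \<alpha> a in auto)
        then have "sat M' w' (Dia_eq \<alpha> (cnt \<sigma> M \<alpha> w (\<sigma> a)) (\<sigma> a))" using all by blast
        then have "card {u \<in> nbh M' \<alpha> w'. sat M' u (\<sigma> a)} = cnt \<sigma> M \<alpha> w (\<sigma> a)"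
          by (simp add: sat_Dia_eq)
        then show ?thesis using cnt_sat[OF fM fM', of \<alpha> w' a] unfolding cnt_def \<sigma>_def \<sigma>'_def by simp
      qed
      show "card {b \<in> nbh M' \<alpha> w'. \<sigma>' b = s} = card {a \<in> nbh M \<alpha> w. \<sigma> a = s}"
        by (rule fiber_lemma(1)[OF finA finB c e])
      show "\<sigma>' ` nbh M' \<alpha> w' = \<sigma> ` nbh M \<alpha> w"
        by (rule fiber_lemma(2)[OF finA finB c e])
    qed
    have S2: "(\<lambda>(\<alpha>, v). Dia_eq \<alpha> (cnt \<sigma>' M' \<alpha> w' (\<sigma>' v)) (\<sigma>' v)) ` (SIGMA \<alpha>:I. nbh M' \<alpha> w')
       = (\<lambda>(\<alpha>, v). Dia_eq \<alpha> (cnt \<sigma> M \<alpha> w (\<sigma> v)) (\<sigma> v)) ` (SIGMA \<alpha>:I. nbh M \<alpha> w)"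
    proof -
      have "(\<lambda>(\<alpha>, v). Dia_eq \<alpha> (cnt \<sigma>' M' \<alpha> w' (\<sigma>' v)) (\<sigma>' v)) ` (SIGMA \<alpha>:I. nbh M' \<alpha> w')
          = (\<Union>\<alpha>\<in>I. (\<lambda>s. Dia_eq \<alpha> (cnt \<sigma>' M' \<alpha> w' s) s) ` (\<sigma>' ` nbh M' \<alpha> w'))"
        by (rule img_sigma)
      also have "\<dots> = (\<Union>\<alpha>\<in>I. (\<lambda>s. Dia_eq \<alpha> (cnt \<sigma> M \<alpha> w s) s) ` (\<sigma> ` nbh M \<alpha> w))"
        using fib img unfolding cnt_def by (intro SUP_cong) simp_all
      also have "\<dots> = (\<lambda>(\<alpha>, v). Dia_eq \<alpha> (cnt \<sigma> M \<alpha> w (\<sigma> v)) (\<sigma> v)) ` (SIGMA \<alpha>:I. nbh M \<alpha> w)"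
        by (rule img_sigma[symmetric])
      finally show ?thesis .
    qed
    have S3: "(\<lambda>\<alpha>. Dia_eq \<alpha> (card (nbh M' \<alpha> w')) Top) ` I = (\<lambda>\<alpha>. Dia_eq \<alpha> (card (nbh M \<alpha> w)) Top) ` I"
      using cd by simp
    show ?thesis unfolding ctype.simps using te S2 S3 unfolding \<sigma>_def \<sigma>'_def by simp
  qed
  show ?case using A1 A2 by blast
qed

lemma ctype_sat_self:
  assumes "finite P" "finite I" "fnb I (M::'w kmodel)"
  shows "sat M w (ctype P I n M w)"
proof -
  have "\<forall>(M::'w kmodel) w. fnb I M \<longrightarrow> sat M w (ctype P I n M w)"
    using ctype_main[OF assms(1,2), of n] by (rule conjunct1)
  then show ?thesis using assms(3) by blast
qed

lemma ctype_sat_eq: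
  assumes "finite P" "finite I" "fnb I (M::'w kmodel)" "fnb I (M'::'w kmodel)" "sat M' w' (ctype P I n M w)"
  shows "ctype P I n M' w' = ctype P I n M w"
proof -
  have "\<forall>(M::'w kmodel) (M'::'w kmodel) w w'. fnb I M \<longrightarrow> fnb I M' \<longrightarrow>
      sat M' w' (ctype P I n M w) \<longrightarrow> ctype P I n M' w' = ctype P I n M w"
    using ctype_main[OF assms(1,2), of n] by (rule conjunct2)
  then show ?thesis using assms(3-5) by blast
qed

lemma ctype_sat_iff:
  assumes "finite P" "finite I" "fnb I (M::'w kmodel)" "fnb I (M'::'w kmodel)"
  shows "sat M' w' (ctype P I n M w) = (ctype P I n M' w' = ctype P I n M w)"
  using ctype_sat_self[OF assms(1,2,4), of w' n] ctype_sat_eq[OF assms, of w' n w] by auto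


lemma ctype_fibers:
  assumes P: "finite P" and I: "finite I" and fM: "fnb I (M::'w kmodel)" and fM': "fnb I (M'::'w kmodel)"
    and s: "sat M' w' (ctype P I (Suc m) M w)" and \<alpha>: "\<alpha> \<in> I"
  shows "card {b \<in> nbh M' \<alpha> w'. ctype P I m M' b = t} = card {a \<in> nbh M \<alpha> w. ctype P I m M a = t}"
    and "ctype P I m M' ` nbh M' \<alpha> w' = ctype P I m M ` nbh M \<alpha> w"
    and "card (nbh M' \<alpha> w') = card (nbh M \<alpha> w)"
proof -
  define \<sigma> where "\<sigma> = ctype P I m M"
  define \<sigma>' where "\<sigma>' = ctype P I m M'"
  have all: "\<forall>\<psi>\<in>({type_eps P M w}
     \<union> (\<lambda>(\<alpha>, v). Dia_eq \<alpha> (cnt \<sigma> M \<alpha> w (\<sigma> v)) (\<sigma> v)) ` (SIGMA \<alpha>:I. nbh M \<alpha> w)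
     \<union> (\<lambda>\<alpha>. Dia_eq \<alpha> (card (nbh M \<alpha> w)) Top) ` I). sat M' w' \<psi>"
    using s unfolding ctype.simps \<sigma>_def by (simp only: sat_conj_set[OF ctype_set_finite[OF I fM]])
  have finA: "finite (nbh M \<alpha> w)" and finB: "finite (nbh M' \<alpha> w')" using fM fM' \<alpha> by (auto simp: fnb_def)
  have "sat M' w' (Dia_eq \<alpha> (card (nbh M \<alpha> w)) Top)" using all \<alpha> by blast
  then show c: "card (nbh M' \<alpha> w') = card (nbh M \<alpha> w)" by (simp add: sat_Dia_eq)
  have e: "card {b \<in> nbh M' \<alpha> w'. \<sigma>' b = \<sigma> a} = card {a' \<in> nbh M \<alpha> w. \<sigma> a' = \<sigma> a}"
    if a: "a \<in> nbh M \<alpha> w" for a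
  proof -
    have "Dia_eq \<alpha> (cnt \<sigma> M \<alpha> w (\<sigma> a)) (\<sigma> a)
       \<in> (\<lambda>(\<alpha>, v). Dia_eq \<alpha> (cnt \<sigma> M \<alpha> w (\<sigma> v)) (\<sigma> v)) ` (SIGMA \<alpha>:I. nbh M \<alpha> w)"
      by (rule image_eqI[where x="(\<alpha>, a)"]) (use \<alpha> a in auto)
    then have "sat M' w' (Dia_eq \<alpha> (cnt \<sigma> M \<alpha> w (\<sigma> a)) (\<sigma> a))" using all by blast
    then have "card {u \<in> nbh M' \<alpha> w'. sat M' u (\<sigma> a)} = cnt \<sigma> M \<alpha> w (\<sigma> a)"
      by (simp add: sat_Dia_eq)
    then show ?thesis using ctype_sat_iff[OF P I fM fM'] unfolding cnt_def \<sigma>_def \<sigma>'_def by simp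
  qed
  show "card {b \<in> nbh M' \<alpha> w'. ctype P I m M' b = t} = card {a \<in> nbh M \<alpha> w. ctype P I m M a = t}"
    using fiber_lemma(1)[OF finA finB c e] unfolding \<sigma>_def \<sigma>'_def .
  show "ctype P I m M' ` nbh M' \<alpha> w' = ctype P I m M ` nbh M \<alpha> w"
    using fiber_lemma(2)[OF finA finB c e] unfolding \<sigma>_def \<sigma>'_def .
qed

lemma ctype_atoms:
  assumes P: "finite P" and I: "finite I" and fM: "fnb I M"
    and s: "sat M' w' (ctype P I n M w)" and p: "p \<in> P"
  shows "w' \<in> Val M' p \<longleftrightarrow> w \<in> Val M p"
proof -
  have "sat M' w' (type_eps P M w)"
  proof (cases n)
    case 0 then show ?thesis using s by simp
  next
    case (Suc m)
    then show ?thesis using s unfolding Suc ctype.simps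
      by (simp only: sat_conj_set[OF ctype_set_finite[OF I fM]]) blast
  qed
  then show ?thesis using P p by (simp add: sat_type_eps_iff)
qed

lemma card_by_fibers:
  assumes A: "finite A"
  shows "card {a \<in> A. Q (g a)} = (\<Sum>s\<in>g ` A. if Q s then card {a \<in> A. g a = s} else 0)"
proof -
  have "{a \<in> A. Q (g a)} = (\<Union>s\<in>{s \<in> g ` A. Q s}. {a \<in> A. g a = s})" by auto
  then have "card {a \<in> A. Q (g a)} = (\<Sum>s\<in>{s \<in> g ` A. Q s}. card {a \<in> A. g a = s})"
    by (simp only:) (rule card_UN_disjoint, use A in auto)
  also have "\<dots> = (\<Sum>s\<in>g ` A. if Q s then card {a \<in> A. g a = s} else 0)"
    by (rule sum.inter_filter) (use A in simp)
  finally show ?thesis .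
qed

lemma ctype_equiv:
  assumes P: "finite P" and I: "finite I"
  shows "wff P I \<psi> \<Longrightarrow> md \<psi> \<le> n \<Longrightarrow> fnb I (M::'w kmodel) \<Longrightarrow> fnb I (M'::'w kmodel) \<Longrightarrow>
    ctype P I n M w = ctype P I n M' w' \<Longrightarrow> sat M w \<psi> = sat M' w' \<psi>"
proof (induction \<psi> arbitrary: n M M' w w')
  case Top then show ?case by simp
next
  case (Prop p)
  have s: "sat M' w' (ctype P I n M w)"
    using ctype_sat_self[OF P I Prop.prems(4), of w' n] Prop.prems(5) by (simp only:)
  have p: "p \<in> P" using Prop.prems(1) by simp
  have a: "w' \<in> Val M' p \<longleftrightarrow> w \<in> Val M p" by (rule ctype_atoms[OF P I Prop.prems(3) s p])
  show ?case using a by simp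
next
  case (Neg \<psi>)
  have 1: "sat M w \<psi> = sat M' w' \<psi>" by (rule Neg.IH) (use Neg.prems in simp_all)
  show ?case using 1 by simp
next
  case (And \<psi>1 \<psi>2)
  have 1: "sat M w \<psi>1 = sat M' w' \<psi>1" by (rule And.IH(1)) (use And.prems in simp_all)
  have 2: "sat M w \<psi>2 = sat M' w' \<psi>2" by (rule And.IH(2)) (use And.prems in simp_all)
  show ?case using 1 2 by simp
next
  case (Dia \<alpha> k \<psi>)
  obtain m where n: "n = Suc m" and md: "md \<psi> \<le> m" using Dia.prems(2) by (cases n) auto
  have \<alpha>: "\<alpha> \<in> I" and w\<psi>: "wff P I \<psi>" using Dia.prems(1) by auto
  have fM: "fnb I M" and fM': "fnb I M'" using Dia.prems by auto
  have s: "sat M' w' (ctype P I (Suc m) M w)"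
    using ctype_sat_self[OF P I fM', of w' "Suc m"] Dia.prems(5) n by simp
  define \<sigma> where "\<sigma> = ctype P I m M"
  define \<sigma>' where "\<sigma>' = ctype P I m M'"
  define A where "A = nbh M \<alpha> w"
  define B where "B = nbh M' \<alpha> w'"
  have finA: "finite A" and finB: "finite B" using fM fM' \<alpha> by (auto simp: fnb_def A_def B_def)
  have fib: "card {b \<in> B. \<sigma>' b = t} = card {a \<in> A. \<sigma> a = t}" for t
    unfolding A_def B_def \<sigma>_def \<sigma>'_def by (rule ctype_fibers(1)[OF P I fM fM' s \<alpha>])
  have img: "\<sigma>' ` B = \<sigma> ` A"
    unfolding A_def B_def \<sigma>_def \<sigma>'_def by (rule ctype_fibers(2)[OF P I fM fM' s \<alpha>])
  define Q where "Q s = (\<exists>a\<in>A. \<sigma> a = s \<and> sat M a \<psi>)" for s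
  have IH: "sat M1 u \<psi> = sat M2 u' \<psi>" if "fnb I M1" "fnb I M2" "ctype P I m M1 u = ctype P I m M2 u'"
    for M1 M2 :: "'w kmodel" and u u'
    using Dia.IH[OF w\<psi> md that] .
  have QA: "sat M a \<psi> = Q (\<sigma> a)" if "a \<in> A" for a
  proof
    assume "sat M a \<psi>" then show "Q (\<sigma> a)" using that unfolding Q_def by blast
  next
    assume "Q (\<sigma> a)"
    then obtain a0 where "a0 \<in> A" "\<sigma> a0 = \<sigma> a" "sat M a0 \<psi>" unfolding Q_def by blast
    then show "sat M a \<psi>" using IH[OF fM fM, of a0 a] unfolding \<sigma>_def by simp
  qed
  have QB: "sat M' b \<psi> = Q (\<sigma>' b)" if "b \<in> B" for b
  proof -
    have "\<sigma>' b \<in> \<sigma> ` A" using img that by blast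
    then obtain a where a: "a \<in> A" "\<sigma> a = \<sigma>' b" by auto
    show ?thesis
    proof
      assume "sat M' b \<psi>"
      then have "sat M a \<psi>" using IH[OF fM fM', of a b] a unfolding \<sigma>_def \<sigma>'_def by simp
      then show "Q (\<sigma>' b)" using a unfolding Q_def by blast
    next
      assume "Q (\<sigma>' b)"
      then obtain a0 where "a0 \<in> A" "\<sigma> a0 = \<sigma>' b" "sat M a0 \<psi>" unfolding Q_def by blast
      then show "sat M' b \<psi>" using IH[OF fM fM', of a0 b] unfolding \<sigma>_def \<sigma>'_def by simp
    qed
  qed
  have "{a \<in> A. sat M a \<psi>} = {a \<in> A. Q (\<sigma> a)}"
    using QA by blast
  then have "card {a \<in> A. sat M a \<psi>} = card {a \<in> A. Q (\<sigma> a)}" by (rule arg_cong)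
  also have "\<dots> = (\<Sum>s\<in>\<sigma> ` A. if Q s then card {a \<in> A. \<sigma> a = s} else 0)"
    by (rule card_by_fibers[OF finA])
  also have "\<dots> = (\<Sum>s\<in>\<sigma>' ` B. if Q s then card {b \<in> B. \<sigma>' b = s} else 0)"
    unfolding img by (rule sum.cong) (simp_all only: fib)
  also have "\<dots> = card {b \<in> B. Q (\<sigma>' b)}"
    by (rule card_by_fibers[OF finB, symmetric])
  also have "{b \<in> B. Q (\<sigma>' b)} = {b \<in> B. sat M' b \<psi>}"
    using QB by blast
  finally show ?case unfolding A_def B_def by simp
qed


lemma model_fnb: "is_model P I M \<Longrightarrow> fnb I M"
  unfolding is_model_def fnb_def nbh_def
proof (intro ballI allI)
  fix \<alpha> w assume h: "finite (W M) \<and> W M \<noteq> {} \<and> (\<forall>\<alpha>\<in>I. Rel M \<alpha> \<subseteq> W M \<times> W M) \<and> (\<forall>p\<in>P. Val M p \<subseteq> W M)"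
    and a: "\<alpha> \<in> I"
  then have "{v. (w, v) \<in> Rel M \<alpha>} \<subseteq> W M" by blast
  then show "finite {v. (w, v) \<in> Rel M \<alpha>}" using h finite_subset by blast
qed

lemma nbh_subset: "is_model P I M \<Longrightarrow> \<alpha> \<in> I \<Longrightarrow> nbh M \<alpha> w \<subseteq> W M"
  unfolding is_model_def nbh_def by blast

lemma iso_sat:
  fixes M1 :: "'a kmodel" and M2 :: "'b kmodel"
  assumes inj: "inj_on f (W M1)"
    and nb: "\<And>\<alpha> x. \<alpha> \<in> I \<Longrightarrow> x \<in> W M1 \<Longrightarrow> nbh M2 \<alpha> (f x) = f ` nbh M1 \<alpha> x"
    and nbW: "\<And>\<alpha> x. \<alpha> \<in> I \<Longrightarrow> nbh M1 \<alpha> x \<subseteq> W M1"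
    and val: "\<And>p x. p \<in> P \<Longrightarrow> x \<in> W M1 \<Longrightarrow> (f x \<in> Val M2 p) = (x \<in> Val M1 p)"
  shows "wff P I \<psi> \<Longrightarrow> x \<in> W M1 \<Longrightarrow> sat M2 (f x) \<psi> = sat M1 x \<psi>"
proof (induction \<psi> arbitrary: x)
  case Top then show ?case by simp
next
  case (Prop p) then show ?case using val by simp
next
  case (Neg \<psi>)
  have "sat M2 (f x) \<psi> = sat M1 x \<psi>" by (rule Neg.IH) (use Neg.prems in simp_all)
  then show ?case by simp
next
  case (And \<psi>1 \<psi>2)
  have "sat M2 (f x) \<psi>1 = sat M1 x \<psi>1" by (rule And.IH(1)) (use And.prems in simp_all)
  moreover have "sat M2 (f x) \<psi>2 = sat M1 x \<psi>2" by (rule And.IH(2)) (use And.prems in simp_all)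
  ultimately show ?case by simp
next
  case (Dia \<alpha> k \<psi>)
  have \<alpha>: "\<alpha> \<in> I" and w: "wff P I \<psi>" using Dia.prems by auto
  have eq: "{v \<in> nbh M2 \<alpha> (f x). sat M2 v \<psi>} = f ` {v \<in> nbh M1 \<alpha> x. sat M1 v \<psi>}"
  proof -
    have "\<And>v. v \<in> nbh M1 \<alpha> x \<Longrightarrow> sat M2 (f v) \<psi> = sat M1 v \<psi>"
      using Dia.IH[OF w] nbW[OF \<alpha>] by blast
    then show ?thesis unfolding nb[OF \<alpha> Dia.prems(2)] by auto
  qed
  have "inj_on f {v \<in> nbh M1 \<alpha> x. sat M1 v \<psi>}"
    by (rule inj_on_subset[OF inj]) (use nbW[OF \<alpha>] in auto)
  then have "card {v \<in> nbh M2 \<alpha> (f x). sat M2 v \<psi>} = card {v \<in> nbh M1 \<alpha> x. sat M1 v \<psi>}"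
    unfolding eq by (rule card_image)
  then show ?case by simp
qed

definition dmodel :: "nat \<Rightarrow> nat \<Rightarrow> nat \<Rightarrow> nat kmodel" where
  "dmodel N r v = \<lparr>W = {0..<N},
     Rel = (\<lambda>\<alpha>. {(i, j). i < N \<and> j < N \<and> prod_encode (\<alpha>, prod_encode (i, j)) \<in> set_decode r}),
     Val = (\<lambda>p. {i. i < N \<and> prod_encode (p, i) \<in> set_decode v})\<rparr>"

lemma dmodel_W[simp]: "W (dmodel N r v) = {0..<N}" by (simp add: dmodel_def)

lemma dmodel_nbh: "nbh (dmodel N r v) \<alpha> i = {j. i < N \<and> j < N \<and> prod_encode (\<alpha>, prod_encode (i, j)) \<in> set_decode r}"
  by (simp add: dmodel_def nbh_def)

lemma dmodel_Val: "Val (dmodel N r v) p = {i. i < N \<and> prod_encode (p, i) \<in> set_decode v}"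
  by (simp add: dmodel_def)

lemma dmodel_is_model: "0 < N \<Longrightarrow> is_model P I (dmodel N r v)"
  unfolding is_model_def by (auto simp: dmodel_def)

lemma encode_model:
  fixes M :: "'w kmodel"
  assumes P: "finite P" and I: "finite I" and M: "is_model P I M"
  shows "\<exists>N r v f. 0 < N \<and> inj_on f (W M) \<and> f ` W M = {0..<N} \<and>
     (\<forall>\<alpha> x. \<alpha> \<in> I \<longrightarrow> x \<in> W M \<longrightarrow> nbh (dmodel N r v) \<alpha> (f x) = f ` nbh M \<alpha> x) \<and>
     (\<forall>p x. p \<in> P \<longrightarrow> x \<in> W M \<longrightarrow> (f x \<in> Val (dmodel N r v) p) = (x \<in> Val M p))"
proof -
  have finW: "finite (W M)" and neW: "W M \<noteq> {}" and relW: "\<forall>\<alpha>\<in>I. Rel M \<alpha> \<subseteq> W M \<times> W M"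
    using M unfolding is_model_def by auto
  obtain f where bij: "bij_betw f (W M) {0..<card (W M)}" using ex_bij_betw_finite_nat[OF finW] by blast
  define N where "N = card (W M)"
  have N: "0 < N" using finW neW unfolding N_def by (simp add: card_gt_0_iff)
  have inj: "inj_on f (W M)" and img: "f ` W M = {0..<N}" using bij unfolding bij_betw_def N_def by auto
  define R where "R = (\<lambda>(\<alpha>, x, y). prod_encode (\<alpha>, prod_encode (f x, f y))) ` {(\<alpha>, x, y). \<alpha> \<in> I \<and> (x, y) \<in> Rel M \<alpha>}"
  define V where "V = (\<lambda>(p, x). prod_encode (p, f x)) ` {(p, x). p \<in> P \<and> x \<in> Val M p \<and> x \<in> W M}"
  have finR: "finite R"
  proof -
    have "{(\<alpha>, x, y). \<alpha> \<in> I \<and> (x, y) \<in> Rel M \<alpha>} \<subseteq> I \<times> W M \<times> W M" using relW by blast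
    then have "finite {(\<alpha>, x, y). \<alpha> \<in> I \<and> (x, y) \<in> Rel M \<alpha>}"
      using I finW finite_subset by blast
    then show ?thesis unfolding R_def by simp
  qed
  have finV: "finite V"
  proof -
    have "{(p, x). p \<in> P \<and> x \<in> Val M p \<and> x \<in> W M} \<subseteq> P \<times> W M" by blast
    then have "finite {(p, x). p \<in> P \<and> x \<in> Val M p \<and> x \<in> W M}"
      using P finW finite_subset by blast
    then show ?thesis unfolding V_def by simp
  qed
  define r where "r = set_encode R"
  define v where "v = set_encode V"
  have r: "set_decode r = R" unfolding r_def using finR by simp
  have v: "set_decode v = V" unfolding v_def using finV by simp
  have nb: "nbh (dmodel N r v) \<alpha> (f x) = f ` nbh M \<alpha> x" if \<alpha>: "\<alpha> \<in> I" and x: "x \<in> W M" for \<alpha> x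
  proof
    show "nbh (dmodel N r v) \<alpha> (f x) \<subseteq> f ` nbh M \<alpha> x"
    proof
      fix j assume "j \<in> nbh (dmodel N r v) \<alpha> (f x)"
      then have j: "j < N" and m: "prod_encode (\<alpha>, prod_encode (f x, j)) \<in> R"
        unfolding dmodel_nbh r by auto
      from m obtain \<alpha>' x' y' where e: "prod_encode (\<alpha>, prod_encode (f x, j)) = prod_encode (\<alpha>', prod_encode (f x', f y'))"
        and \<alpha>': "\<alpha>' \<in> I" and xy: "(x', y') \<in> Rel M \<alpha>'"
        unfolding R_def by auto
      have "x' \<in> W M" "y' \<in> W M" using xy relW \<alpha>' by auto
      moreover have "\<alpha>' = \<alpha>" "f x' = f x" "j = f y'" using e by auto
      ultimately have "x' = x" using inj x by (auto dest: inj_onD)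
      then show "j \<in> f ` nbh M \<alpha> x" using xy \<open>\<alpha>' = \<alpha>\<close> \<open>j = f y'\<close> unfolding nbh_def by auto
    qed
  next
    show "f ` nbh M \<alpha> x \<subseteq> nbh (dmodel N r v) \<alpha> (f x)"
    proof
      fix j assume "j \<in> f ` nbh M \<alpha> x"
      then obtain y where y: "(x, y) \<in> Rel M \<alpha>" and j: "j = f y" unfolding nbh_def by auto
      have "y \<in> W M" using y relW \<alpha> by auto
      then have "f y < N" "f x < N" using img x by auto
      moreover have "prod_encode (\<alpha>, prod_encode (f x, f y)) \<in> R"
        unfolding R_def using \<alpha> y by (auto intro!: image_eqI[where x="(\<alpha>, x, y)"])
      ultimately show "j \<in> nbh (dmodel N r v) \<alpha> (f x)" unfolding dmodel_nbh r j by auto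
    qed
  qed
  have vl: "(f x \<in> Val (dmodel N r v) p) = (x \<in> Val M p)" if p: "p \<in> P" and x: "x \<in> W M" for p x
  proof
    assume "f x \<in> Val (dmodel N r v) p"
    then have "prod_encode (p, f x) \<in> V" unfolding dmodel_Val v by auto
    then obtain p' x' where e: "prod_encode (p, f x) = prod_encode (p', f x')" and "x' \<in> Val M p'" "x' \<in> W M"
      unfolding V_def by auto
    moreover have "p' = p" "f x' = f x" using e by auto
    ultimately show "x \<in> Val M p" using inj x by (auto dest: inj_onD)
  next
    assume "x \<in> Val M p"
    then have "prod_encode (p, f x) \<in> V" unfolding V_def using p x by (auto intro!: image_eqI[where x="(p, x)"])
    moreover have "f x < N" using img x by auto
    ultimately show "f x \<in> Val (dmodel N r v) p" unfolding dmodel_Val v by auto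
  qed
  show ?thesis using N inj img nb vl by blast
qed


lemma adm_head: "admissible_widths I M w (k # ks) \<Longrightarrow> \<alpha> \<in> I \<Longrightarrow> card (nbh M \<alpha> w) < k \<alpha>"
proof -
  assume a: "admissible_widths I M w (k # ks)" and \<alpha>: "\<alpha> \<in> I"
  have "\<forall>v. (w, v) \<in> all_rel I M ^^ 0 \<longrightarrow> card (nbh M \<alpha> v) < ((k # ks) ! 0) \<alpha>"
    using a \<alpha> unfolding admissible_widths_def by blast
  then show ?thesis by simp
qed

lemma adm_tail:
  assumes a: "admissible_widths I M w (k # ks)" and \<alpha>: "\<alpha> \<in> I" and v: "v \<in> nbh M \<alpha> w"
  shows "admissible_widths I M v ks"
  unfolding admissible_widths_def
proof (intro allI impI ballI conjI)
  fix i \<beta> assume i: "i < length ks" and \<beta>: "\<beta> \<in> I"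
  have i': "Suc i < length (k # ks)" using i by simp
  show "0 < (ks ! i) \<beta>" using a i' \<beta> unfolding admissible_widths_def by fastforce
  fix z assume z: "(v, z) \<in> all_rel I M ^^ i"
  have "(w, v) \<in> all_rel I M" using \<alpha> v unfolding all_rel_def nbh_def by blast
  then have "(w, z) \<in> all_rel I M ^^ Suc i" using z by (rule relpow_Suc_I2)
  then show "card (nbh M \<beta> z) < (ks ! i) \<beta>" using a i' \<beta> unfolding admissible_widths_def by fastforce
qed

lemma adm_exists:
  assumes M: "is_model P I M"
  shows "admissible_widths I M w (replicate n (\<lambda>\<alpha>. Suc (card (W M))))"
  unfolding admissible_widths_def
proof (intro allI impI ballI conjI)
  fix i \<alpha> assume i: "i < length (replicate n (\<lambda>\<alpha>. Suc (card (W M))))" and \<alpha>: "\<alpha> \<in> I"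
  show "0 < (replicate n (\<lambda>\<alpha>. Suc (card (W M))) ! i) \<alpha>" using i by simp
  fix v
  have "finite (W M)" using M unfolding is_model_def by blast
  then have "card (nbh M \<alpha> v) \<le> card (W M)"
    using nbh_subset[OF M \<alpha>] by (rule card_mono)
  then show "card (nbh M \<alpha> v) < (replicate n (\<lambda>\<alpha>. Suc (card (W M))) ! i) \<alpha>" using i by simp
qed

definition Tset :: "nat set \<Rightarrow> nat set \<Rightarrow> (nat \<Rightarrow> nat) list \<Rightarrow> form set" where
  "Tset P I ks = {gtype P I ks M' v | M' v. is_model P I M' \<and> v \<in> W M'}"

definition GS :: "nat set \<Rightarrow> nat set \<Rightarrow> (nat \<Rightarrow> nat) \<Rightarrow> form set \<Rightarrow> nat kmodel \<Rightarrow> nat \<Rightarrow> form set" where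
  "GS P I k T M w = {type_eps P M w}
       \<union> {Dia_eq \<alpha> l \<tau> | \<alpha> l \<tau>. \<alpha> \<in> I \<and> 1 \<le> l \<and> l \<le> k \<alpha> - 1 \<and> \<tau> \<in> T \<and> sat M w (Dia_eq \<alpha> l \<tau>)}
       \<union> {Dia \<alpha> (k \<alpha>) \<tau> | \<alpha> \<tau>. \<alpha> \<in> I \<and> \<tau> \<in> T \<and> sat M w (Dia \<alpha> (k \<alpha>) \<tau>)}
       \<union> {Dia_eq \<alpha> (card (nbh M \<alpha> w)) Top | \<alpha>. \<alpha> \<in> I \<and> card (nbh M \<alpha> w) < k \<alpha>}"

lemma gtype_Cons: "gtype P I (k # ks) M w = conj_set (GS P I k (Tset P I ks) M w)"
  by (simp add: GS_def Tset_def Let_def)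

definition Lits :: "nat set \<Rightarrow> form set" where
  "Lits P = {Prop p | p. p \<in> P} \<union> {Neg (Prop p) | p. p \<in> P}"

lemma finite_Lits: "finite P \<Longrightarrow> finite (Lits P)"
  unfolding Lits_def by auto

lemma type_eps_in: "type_eps P M w \<in> conj_set ` Pow (Lits P)"
  unfolding type_eps_lits by (rule imageI) (auto simp: lits_def Lits_def)

definition U :: "nat set \<Rightarrow> nat set \<Rightarrow> (nat \<Rightarrow> nat) \<Rightarrow> form set \<Rightarrow> form set" where
  "U P I k T = conj_set ` Pow (Lits P)
     \<union> (\<lambda>(\<alpha>, l, \<tau>). Dia_eq \<alpha> l \<tau>) ` (SIGMA \<alpha>:I. {..k \<alpha>} \<times> T)
     \<union> (\<lambda>(\<alpha>, \<tau>). Dia \<alpha> (k \<alpha>) \<tau>) ` (I \<times> T)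
     \<union> (\<lambda>(\<alpha>, c). Dia_eq \<alpha> c Top) ` (SIGMA \<alpha>:I. {..k \<alpha>})"

lemma finite_U: "finite P \<Longrightarrow> finite I \<Longrightarrow> finite T \<Longrightarrow> finite (U P I k T)"
  unfolding U_def by (auto simp: finite_Lits intro!: finite_SigmaI)

lemma GS_sub_U: "GS P I k T M w \<subseteq> U P I k T"
proof
  fix \<psi> assume h: "\<psi> \<in> GS P I k T M w"
  have "\<psi> = type_eps P M w \<or> \<psi> \<in> {Dia_eq \<alpha> l \<tau> | \<alpha> l \<tau>. \<alpha> \<in> I \<and> 1 \<le> l \<and> l \<le> k \<alpha> - 1 \<and> \<tau> \<in> T \<and> sat M w (Dia_eq \<alpha> l \<tau>)}
       \<or> \<psi> \<in> {Dia \<alpha> (k \<alpha>) \<tau> | \<alpha> \<tau>. \<alpha> \<in> I \<and> \<tau> \<in> T \<and> sat M w (Dia \<alpha> (k \<alpha>) \<tau>)}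
       \<or> \<psi> \<in> {Dia_eq \<alpha> (card (nbh M \<alpha> w)) Top | \<alpha>. \<alpha> \<in> I \<and> card (nbh M \<alpha> w) < k \<alpha>}"
    using h unfolding GS_def by (simp only: Un_iff singleton_iff disj_assoc)
  then show "\<psi> \<in> U P I k T"
  proof (elim disjE)
    assume "\<psi> = type_eps P M w" then show ?thesis using type_eps_in unfolding U_def
      by (intro UnI1) simp
  next
    assume "\<psi> \<in> {Dia_eq \<alpha> l \<tau> | \<alpha> l \<tau>. \<alpha> \<in> I \<and> 1 \<le> l \<and> l \<le> k \<alpha> - 1 \<and> \<tau> \<in> T \<and> sat M w (Dia_eq \<alpha> l \<tau>)}"
    then obtain \<alpha> l \<tau> where b: "\<psi> = Dia_eq \<alpha> l \<tau>" "\<alpha> \<in> I" "l \<le> k \<alpha> - 1" "\<tau> \<in> T" by blast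
    have "\<psi> \<in> (\<lambda>(\<alpha>, l, \<tau>). Dia_eq \<alpha> l \<tau>) ` (SIGMA \<alpha>:I. {..k \<alpha>} \<times> T)"
      by (rule image_eqI[where x="(\<alpha>, l, \<tau>)"]) (use b in auto)
    then show ?thesis unfolding U_def by (rule UnI1[OF UnI1[OF UnI2]])
  next
    assume "\<psi> \<in> {Dia \<alpha> (k \<alpha>) \<tau> | \<alpha> \<tau>. \<alpha> \<in> I \<and> \<tau> \<in> T \<and> sat M w (Dia \<alpha> (k \<alpha>) \<tau>)}"
    then obtain \<alpha> \<tau> where c: "\<psi> = Dia \<alpha> (k \<alpha>) \<tau>" "\<alpha> \<in> I" "\<tau> \<in> T" by blast
    have "\<psi> \<in> (\<lambda>(\<alpha>, \<tau>). Dia \<alpha> (k \<alpha>) \<tau>) ` (I \<times> T)"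
      by (rule image_eqI[where x="(\<alpha>, \<tau>)"]) (use c in auto)
    then show ?thesis unfolding U_def by (rule UnI1[OF UnI2])
  next
    assume "\<psi> \<in> {Dia_eq \<alpha> (card (nbh M \<alpha> w)) Top | \<alpha>. \<alpha> \<in> I \<and> card (nbh M \<alpha> w) < k \<alpha>}"
    then obtain \<alpha> where d: "\<psi> = Dia_eq \<alpha> (card (nbh M \<alpha> w)) Top" "\<alpha> \<in> I" "card (nbh M \<alpha> w) < k \<alpha>" by blast
    have "\<psi> \<in> (\<lambda>(\<alpha>, c). Dia_eq \<alpha> c Top) ` (SIGMA \<alpha>:I. {..k \<alpha>})"
      by (rule image_eqI[where x="(\<alpha>, card (nbh M \<alpha> w))"]) (use d in auto)
    then show ?thesis unfolding U_def by (rule UnI2)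
  qed
qed

lemma finite_Tset: "finite P \<Longrightarrow> finite I \<Longrightarrow> finite (Tset P I ks)"
proof (induction ks)
  case Nil
  have "Tset P I [] \<subseteq> conj_set ` Pow (Lits P)" unfolding Tset_def using type_eps_in by auto
  then show ?case using Nil finite_Lits finite_subset by blast
next
  case (Cons k ks)
  have "Tset P I (k # ks) \<subseteq> conj_set ` Pow (U P I k (Tset P I ks))"
    unfolding Tset_def gtype_Cons using GS_sub_U by blast
  moreover have "finite (U P I k (Tset P I ks))" using Cons finite_U by blast
  ultimately show ?case using finite_subset by blast
qed

lemma finite_GS: "finite P \<Longrightarrow> finite I \<Longrightarrow> finite T \<Longrightarrow> finite (GS P I k T M w)"
  by (rule finite_subset[OF GS_sub_U finite_U])

lemma gtype_self:
  assumes P: "finite P" and I: "finite I"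
  shows "sat M w (gtype P I ks M w)"
proof (cases ks)
  case Nil then show ?thesis using P by (simp add: sat_type_eps)
next
  case (Cons k ks')
  have fin: "finite (GS P I k (Tset P I ks') M w)" by (rule finite_GS[OF P I finite_Tset[OF P I]])
  have "\<forall>\<psi>\<in>GS P I k (Tset P I ks') M w. sat M w \<psi>"
  proof
    fix \<psi> assume h: "\<psi> \<in> GS P I k (Tset P I ks') M w"
    let ?T = "Tset P I ks'"
    have "\<psi> = type_eps P M w \<or> \<psi> \<in> {Dia_eq \<alpha> l \<tau> | \<alpha> l \<tau>. \<alpha> \<in> I \<and> 1 \<le> l \<and> l \<le> k \<alpha> - 1 \<and> \<tau> \<in> ?T \<and> sat M w (Dia_eq \<alpha> l \<tau>)}
       \<or> \<psi> \<in> {Dia \<alpha> (k \<alpha>) \<tau> | \<alpha> \<tau>. \<alpha> \<in> I \<and> \<tau> \<in> ?T \<and> sat M w (Dia \<alpha> (k \<alpha>) \<tau>)}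
       \<or> \<psi> \<in> {Dia_eq \<alpha> (card (nbh M \<alpha> w)) Top | \<alpha>. \<alpha> \<in> I \<and> card (nbh M \<alpha> w) < k \<alpha>}"
      using h unfolding GS_def by (simp only: Un_iff singleton_iff disj_assoc)
    then show "sat M w \<psi>"
    proof (elim disjE)
      assume "\<psi> = type_eps P M w" then show ?thesis using P by (simp add: sat_type_eps)
    next
      assume "\<psi> \<in> {Dia_eq \<alpha> l \<tau> | \<alpha> l \<tau>. \<alpha> \<in> I \<and> 1 \<le> l \<and> l \<le> k \<alpha> - 1 \<and> \<tau> \<in> ?T \<and> sat M w (Dia_eq \<alpha> l \<tau>)}"
      then show ?thesis by blast
    next
      assume "\<psi> \<in> {Dia \<alpha> (k \<alpha>) \<tau> | \<alpha> \<tau>. \<alpha> \<in> I \<and> \<tau> \<in> ?T \<and> sat M w (Dia \<alpha> (k \<alpha>) \<tau>)}"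
      then show ?thesis by blast
    next
      assume "\<psi> \<in> {Dia_eq \<alpha> (card (nbh M \<alpha> w)) Top | \<alpha>. \<alpha> \<in> I \<and> card (nbh M \<alpha> w) < k \<alpha>}"
      then obtain \<alpha> where "\<psi> = Dia_eq \<alpha> (card (nbh M \<alpha> w)) Top" by blast
      then show ?thesis by (simp add: sat_Dia_eq)
    qed
  qed
  then show ?thesis unfolding Cons gtype_Cons using fin by (simp add: sat_conj_set)
qed

lemma card_filter_sum: "finite A \<Longrightarrow> card {a \<in> A. Q a} = (\<Sum>a\<in>A. if Q a then 1 else 0)"
proof -
  assume A: "finite A"
  have "card {a \<in> A. Q a} = (\<Sum>a\<in>{a \<in> A. Q a}. 1)" by simp
  also have "\<dots> = (\<Sum>a\<in>A. if Q a then 1 else 0)" by (rule sum.inter_filter[OF A])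
  finally show ?thesis .
qed

lemma double_count:
  assumes "finite A" "finite T"
  shows "(\<Sum>\<tau>\<in>T. card {a \<in> A. R a \<tau>}) = (\<Sum>a\<in>A. card {\<tau> \<in> T. R a \<tau>})"
proof -
  have "(\<Sum>\<tau>\<in>T. card {a \<in> A. R a \<tau>}) = (\<Sum>\<tau>\<in>T. \<Sum>a\<in>A. if R a \<tau> then 1 else 0)"
    using assms(1) by (simp only: card_filter_sum)
  also have "\<dots> = (\<Sum>a\<in>A. \<Sum>\<tau>\<in>T. if R a \<tau> then 1 else 0)" by (rule sum.swap)
  also have "\<dots> = (\<Sum>a\<in>A. card {\<tau> \<in> T. R a \<tau>})"
    using assms(2) by (simp only: card_filter_sum)
  finally show ?thesis .
qed


lemma gtype_main:
  assumes P: "finite P" and I: "finite I"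
  shows "(\<forall>(M::nat kmodel) u. is_model P I M \<and> u \<in> W M \<and> admissible_widths I M u ks \<longrightarrow>
             gtype P I ks M u = ctype P I (length ks) M u) \<and>
         (\<forall>(M::nat kmodel) u (M'::nat kmodel) v'. is_model P I M \<and> u \<in> W M \<and> admissible_widths I M u ks
             \<and> is_model P I M' \<and> v' \<in> W M' \<and> sat M u (gtype P I ks M' v') \<longrightarrow> gtype P I ks M' v' = gtype P I ks M u)"
proof (induction ks)
  case Nil
  show ?case using P by (auto dest: type_eps_eq)
next
  case (Cons k ks)
  define T where "T = Tset P I ks"
  define n where "n = length ks"
  have finT: "finite T" unfolding T_def by (rule finite_Tset[OF P I])
  have G: "gtype P I ks M u = ctype P I n M u"
    if "is_model P I M" "u \<in> W M" "admissible_widths I M u ks" for M u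
    using Cons.IH that unfolding n_def by blast
  have X: "gtype P I ks M' v' = gtype P I ks M u"
    if "is_model P I M" "u \<in> W M" "admissible_widths I M u ks" "is_model P I M'" "v' \<in> W M'"
       "sat M u (gtype P I ks M' v')" for M u M' v'
    using Cons.IH that by blast
  have succ: "x \<in> W M \<and> gtype P I ks M x = ctype P I n M x \<and> ctype P I n M x \<in> T \<and>
      (\<forall>\<tau>\<in>T. sat M x \<tau> = (\<tau> = ctype P I n M x))"
    if M: "is_model P I M" and u: "u \<in> W M" and a: "admissible_widths I M u (k # ks)"
      and \<alpha>: "\<alpha> \<in> I" and x: "x \<in> nbh M \<alpha> u" for M u \<alpha> x
  proof -
    have xW: "x \<in> W M" using nbh_subset[OF M \<alpha>] x by blast
    have ax: "admissible_widths I M x ks" by (rule adm_tail[OF a \<alpha> x])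
    have g: "gtype P I ks M x = ctype P I n M x" by (rule G[OF M xW ax])
    have inT: "ctype P I n M x \<in> T" unfolding T_def Tset_def using M xW g by force
    have "sat M x \<tau> = (\<tau> = ctype P I n M x)" if \<tau>: "\<tau> \<in> T" for \<tau>
    proof
      assume s: "sat M x \<tau>"
      from \<tau> obtain M' v' where \<tau>': "\<tau> = gtype P I ks M' v'" "is_model P I M'" "v' \<in> W M'"
        unfolding T_def Tset_def by blast
      have "gtype P I ks M' v' = gtype P I ks M x" by (rule X[OF M xW ax \<tau>'(2,3)]) (use s \<tau>' in simp)
      then show "\<tau> = ctype P I n M x" using \<tau>' g by simp
    next
      assume "\<tau> = ctype P I n M x"
      then show "sat M x \<tau>" using gtype_self[OF P I, of M x ks] g by simp
    qed
    then show ?thesis using xW g inT by blast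
  qed
  have cnt_T: "card {x \<in> nbh M \<alpha> u. sat M x \<tau>} = card {x \<in> nbh M \<alpha> u. ctype P I n M x = \<tau>}"
    if M: "is_model P I M" and u: "u \<in> W M" and a: "admissible_widths I M u (k # ks)"
      and \<alpha>: "\<alpha> \<in> I" and \<tau>: "\<tau> \<in> T" for M u \<alpha> \<tau>
  proof -
    have "{x \<in> nbh M \<alpha> u. sat M x \<tau>} = {x \<in> nbh M \<alpha> u. ctype P I n M x = \<tau>}"
    proof (rule Collect_cong)
      fix x
      show "(x \<in> nbh M \<alpha> u \<and> sat M x \<tau>) = (x \<in> nbh M \<alpha> u \<and> ctype P I n M x = \<tau>)"
        using succ[OF M u a \<alpha>, of x] \<tau> by auto
    qed
    then show ?thesis by simp
  qed
  have finN: "finite (nbh M \<alpha> u)" if "is_model P I M" "\<alpha> \<in> I" for M :: "nat kmodel" and \<alpha> u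
    using model_fnb[OF that(1)] that(2) unfolding fnb_def by blast
  have GP: "gtype P I (k # ks) M u = ctype P I (Suc n) M u"
    if M: "is_model P I M" and u: "u \<in> W M" and a: "admissible_widths I M u (k # ks)" for M u
  proof -
    define \<sigma> where "\<sigma> = ctype P I n M"
    define A1 where "A1 = {Dia_eq \<alpha> l \<tau> | \<alpha> l \<tau>. \<alpha> \<in> I \<and> 1 \<le> l \<and> l \<le> k \<alpha> - 1 \<and> \<tau> \<in> T \<and> sat M u (Dia_eq \<alpha> l \<tau>)}"
    define A2 where "A2 = {Dia \<alpha> (k \<alpha>) \<tau> | \<alpha> \<tau>. \<alpha> \<in> I \<and> \<tau> \<in> T \<and> sat M u (Dia \<alpha> (k \<alpha>) \<tau>)}"
    define A3 where "A3 = {Dia_eq \<alpha> (card (nbh M \<alpha> u)) Top | \<alpha>. \<alpha> \<in> I \<and> card (nbh M \<alpha> u) < k \<alpha>}"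
    define B1 where "B1 = (\<lambda>(\<alpha>, v). Dia_eq \<alpha> (cnt \<sigma> M \<alpha> u (\<sigma> v)) (\<sigma> v)) ` (SIGMA \<alpha>:I. nbh M \<alpha> u)"
    define B3 where "B3 = (\<lambda>\<alpha>. Dia_eq \<alpha> (card (nbh M \<alpha> u)) Top) ` I"
    have GSe: "GS P I k T M u = {type_eps P M u} \<union> A1 \<union> A2 \<union> A3"
      unfolding GS_def A1_def A2_def A3_def ..
    have CTe: "ctype P I (Suc n) M u = conj_set ({type_eps P M u} \<union> B1 \<union> B3)"
      unfolding B1_def B3_def \<sigma>_def by simp
    have A2e: "A2 = {}"
    proof -
      have "\<not> sat M u (Dia \<alpha> (k \<alpha>) \<tau>)" if \<alpha>: "\<alpha> \<in> I" for \<alpha> \<tau>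
      proof -
        have "card {x \<in> nbh M \<alpha> u. sat M x \<tau>} \<le> card (nbh M \<alpha> u)"
          by (rule card_mono[OF finN[OF M \<alpha>]]) auto
        then show ?thesis using adm_head[OF a \<alpha>] by simp
      qed
      then show ?thesis unfolding A2_def by blast
    qed
    have A3e: "A3 = B3" unfolding A3_def B3_def using adm_head[OF a] by blast
    have A1e: "A1 = B1"
    proof
      show "A1 \<subseteq> B1"
      proof
        fix \<psi> assume "\<psi> \<in> A1"
        then obtain \<alpha> l \<tau> where \<psi>: "\<psi> = Dia_eq \<alpha> l \<tau>" and \<alpha>: "\<alpha> \<in> I" and l: "1 \<le> l" and \<tau>: "\<tau> \<in> T"
          and s: "sat M u (Dia_eq \<alpha> l \<tau>)" unfolding A1_def by blast
        have c: "card {x \<in> nbh M \<alpha> u. sat M x \<tau>} = l" using s by (simp add: sat_Dia_eq)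
        then have "{x \<in> nbh M \<alpha> u. sat M x \<tau>} \<noteq> {}" using l by (metis card.empty not_one_le_zero)
        then obtain x where x: "x \<in> nbh M \<alpha> u" "sat M x \<tau>" by blast
        have "\<tau> = \<sigma> x" using succ[OF M u a \<alpha> x(1)] \<tau> x(2) unfolding \<sigma>_def by blast
        moreover have "l = cnt \<sigma> M \<alpha> u (\<sigma> x)"
          using c cnt_T[OF M u a \<alpha> \<tau>] \<open>\<tau> = \<sigma> x\<close> unfolding cnt_def \<sigma>_def by simp
        ultimately show "\<psi> \<in> B1" unfolding B1_def \<psi> using \<alpha> x(1)
          by (intro image_eqI[where x="(\<alpha>, x)"]) auto
      qed
    next
      show "B1 \<subseteq> A1"
      proof
        fix \<psi> assume "\<psi> \<in> B1"
        then obtain p where p: "p \<in> (SIGMA \<alpha>:I. nbh M \<alpha> u)"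
          "\<psi> = (\<lambda>(\<alpha>, v). Dia_eq \<alpha> (cnt \<sigma> M \<alpha> u (\<sigma> v)) (\<sigma> v)) p" unfolding B1_def by (rule imageE)
        obtain \<alpha> v where pv: "p = (\<alpha>, v)" by fastforce
        have \<alpha>: "\<alpha> \<in> I" and v: "v \<in> nbh M \<alpha> u"
          and \<psi>: "\<psi> = Dia_eq \<alpha> (cnt \<sigma> M \<alpha> u (\<sigma> v)) (\<sigma> v)" using p unfolding pv by auto
        have sv: "\<sigma> v \<in> T" using succ[OF M u a \<alpha> v] unfolding \<sigma>_def by blast
        have "cnt \<sigma> M \<alpha> u (\<sigma> v) \<le> card (nbh M \<alpha> u)"
          unfolding cnt_def by (rule card_mono[OF finN[OF M \<alpha>]]) auto
        then have le: "cnt \<sigma> M \<alpha> u (\<sigma> v) \<le> k \<alpha> - 1" using adm_head[OF a \<alpha>] by simp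
        have "v \<in> {x \<in> nbh M \<alpha> u. \<sigma> x = \<sigma> v}" using v by simp
        then have ge: "1 \<le> cnt \<sigma> M \<alpha> u (\<sigma> v)" unfolding cnt_def using finN[OF M \<alpha>, of u]
          by (metis (no_types, lifting) One_nat_def Suc_leI card_gt_0_iff empty_iff finite_subset mem_Collect_eq subsetI)
        have "sat M u (Dia_eq \<alpha> (cnt \<sigma> M \<alpha> u (\<sigma> v)) (\<sigma> v))"
          using cnt_T[OF M u a \<alpha> sv] unfolding sat_Dia_eq cnt_def \<sigma>_def by simp
        then show "\<psi> \<in> A1" unfolding A1_def \<psi> using \<alpha> sv le ge by blast
      qed
    qed
    have "GS P I k T M u = {type_eps P M u} \<union> B1 \<union> B3" using GSe A1e A2e A3e by simp
    then show ?thesis unfolding gtype_Cons T_def[symmetric] CTe by simp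
  qed
  have XP: "gtype P I (k # ks) M' v' = gtype P I (k # ks) M u"
    if M: "is_model P I M" and u: "u \<in> W M" and a: "admissible_widths I M u (k # ks)"
      and M': "is_model P I M'" and v': "v' \<in> W M'" and s: "sat M u (gtype P I (k # ks) M' v')" for M u M' v'
  proof -
    have all: "\<forall>\<psi>\<in>GS P I k T M' v'. sat M u \<psi>"
      using s unfolding gtype_Cons T_def[symmetric] by (simp add: sat_conj_set finite_GS[OF P I finT])
    have inGS: "\<psi> \<in> GS P I k T M' v' \<Longrightarrow> sat M u \<psi>" for \<psi> using all by blast
    have te: "type_eps P M' v' = type_eps P M u"
    proof -
      have "sat M u (type_eps P M' v')" using inGS unfolding GS_def by blast
      then show ?thesis using type_eps_eq[OF P] by metis
    qed
    define c where "c \<alpha> \<tau> = card {x \<in> nbh M \<alpha> u. sat M x \<tau>}" for \<alpha> \<tau>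
    define c' where "c' \<alpha> \<tau> = card {y \<in> nbh M' \<alpha> v'. sat M' y \<tau>}" for \<alpha> \<tau>
    have main: "(\<forall>\<tau>\<in>T. c' \<alpha> \<tau> = c \<alpha> \<tau>) \<and> card (nbh M' \<alpha> v') = card (nbh M \<alpha> u)" if \<alpha>: "\<alpha> \<in> I" for \<alpha>
    proof -
      define N where "N = nbh M \<alpha> u"
      define N' where "N' = nbh M' \<alpha> v'"
      have fN: "finite N" and fN': "finite N'" unfolding N_def N'_def using finN M M' \<alpha> by auto
      have kN: "card N < k \<alpha>" unfolding N_def by (rule adm_head[OF a \<alpha>])
      have cle: "c \<alpha> \<tau> \<le> card N" for \<tau> unfolding c_def N_def
        by (rule card_mono[OF fN[unfolded N_def]]) auto
      have e: "c \<alpha> \<tau> = c' \<alpha> \<tau>" if \<tau>: "\<tau> \<in> T" and pos: "1 \<le> c' \<alpha> \<tau>" for \<tau>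
      proof (cases "k \<alpha> \<le> c' \<alpha> \<tau>")
        case True
        have "Dia \<alpha> (k \<alpha>) \<tau> \<in> GS P I k T M' v'"
          unfolding GS_def using \<alpha> \<tau> True unfolding c'_def by auto
        then have "sat M u (Dia \<alpha> (k \<alpha>) \<tau>)" by (rule inGS)
        then have "k \<alpha> \<le> c \<alpha> \<tau>" unfolding c_def by simp
        then show ?thesis using cle[of \<tau>] kN by simp
      next
        case False
        have "sat M' v' (Dia_eq \<alpha> (c' \<alpha> \<tau>) \<tau>)" unfolding c'_def by (simp add: sat_Dia_eq)
        then have "Dia_eq \<alpha> (c' \<alpha> \<tau>) \<tau> \<in> GS P I k T M' v'"
          unfolding GS_def using \<alpha> \<tau> False pos by auto
        then have "sat M u (Dia_eq \<alpha> (c' \<alpha> \<tau>) \<tau>)" by (rule inGS)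
        then show ?thesis unfolding c_def by (simp add: sat_Dia_eq)
      qed
      have f: "card N' \<le> (\<Sum>\<tau>\<in>T. c' \<alpha> \<tau>)"
      proof -
        have "(\<Sum>\<tau>\<in>T. c' \<alpha> \<tau>) = (\<Sum>y\<in>N'. card {\<tau> \<in> T. sat M' y \<tau>})"
          unfolding c'_def N'_def by (rule double_count[OF fN'[unfolded N'_def] finT])
        moreover have "(\<Sum>y\<in>N'. 1) \<le> (\<Sum>y\<in>N'. card {\<tau> \<in> T. sat M' y \<tau>})"
        proof (rule sum_mono)
          fix y assume y: "y \<in> N'"
          have yW: "y \<in> W M'" using nbh_subset[OF M' \<alpha>] y unfolding N'_def by blast
          have "gtype P I ks M' y \<in> {\<tau> \<in> T. sat M' y \<tau>}"
            using gtype_self[OF P I, of M' y ks] M' yW unfolding T_def Tset_def by blast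
          moreover have "finite {\<tau> \<in> T. sat M' y \<tau>}" using finT by simp
          ultimately show "1 \<le> card {\<tau> \<in> T. sat M' y \<tau>}"
            by (metis (no_types, lifting) One_nat_def Suc_leI card_gt_0_iff empty_iff)
        qed
        ultimately show ?thesis by simp
      qed
      have g: "(\<Sum>\<tau>\<in>T. c \<alpha> \<tau>) = card N"
      proof -
        have "(\<Sum>\<tau>\<in>T. c \<alpha> \<tau>) = (\<Sum>x\<in>N. card {\<tau> \<in> T. sat M x \<tau>})"
          unfolding c_def N_def by (rule double_count[OF fN[unfolded N_def] finT])
        also have "\<dots> = (\<Sum>x\<in>N. 1)"
        proof (rule sum.cong[OF refl])
          fix x assume x: "x \<in> N"
          have sx: "ctype P I n M x \<in> T \<and> (\<forall>\<tau>\<in>T. sat M x \<tau> = (\<tau> = ctype P I n M x))"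
            using succ[OF M u a \<alpha> x[unfolded N_def]] by blast
          then have "{\<tau> \<in> T. sat M x \<tau>} = {ctype P I n M x}" by blast
          then show "card {\<tau> \<in> T. sat M x \<tau>} = 1" by simp
        qed
        finally show ?thesis by simp
      qed
      define Pos where "Pos = {\<tau> \<in> T. 1 \<le> c' \<alpha> \<tau>}"
      have PosT: "Pos \<subseteq> T" unfolding Pos_def by blast
      have s1: "(\<Sum>\<tau>\<in>T. c' \<alpha> \<tau>) = (\<Sum>\<tau>\<in>Pos. c' \<alpha> \<tau>)"
      proof -
        have "(\<Sum>\<tau>\<in>Pos. c' \<alpha> \<tau>) = (\<Sum>\<tau>\<in>T. if 1 \<le> c' \<alpha> \<tau> then c' \<alpha> \<tau> else 0)"
          unfolding Pos_def by (rule sum.inter_filter[OF finT])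
        also have "\<dots> = (\<Sum>\<tau>\<in>T. c' \<alpha> \<tau>)" by (rule sum.cong) auto
        finally show ?thesis by simp
      qed
      have s2: "(\<Sum>\<tau>\<in>Pos. c' \<alpha> \<tau>) = (\<Sum>\<tau>\<in>Pos. c \<alpha> \<tau>)"
        by (rule sum.cong[OF refl]) (use e in \<open>auto simp: Pos_def\<close>)
      have fPos: "finite Pos" using finT PosT finite_subset by blast
      have s3: "(\<Sum>\<tau>\<in>T. c \<alpha> \<tau>) = (\<Sum>\<tau>\<in>T - Pos. c \<alpha> \<tau>) + (\<Sum>\<tau>\<in>Pos. c \<alpha> \<tau>)"
        by (rule sum.subset_diff[OF PosT finT])
      have le1: "card N' \<le> card N" using f s1 s2 s3 g by linarith
      then have "card N' < k \<alpha>" using kN by simp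
      have "sat M' v' (Dia_eq \<alpha> (card N') Top)" unfolding N'_def by (simp add: sat_Dia_eq)
      have "Dia_eq \<alpha> (card N') Top \<in> GS P I k T M' v'"
        unfolding GS_def N'_def using \<alpha> \<open>card N' < k \<alpha>\<close>[unfolded N'_def] by blast
      then have "sat M u (Dia_eq \<alpha> (card N') Top)" by (rule inGS)
      then have cardeq: "card N = card N'" unfolding N_def by (simp add: sat_Dia_eq)
      have "(\<Sum>\<tau>\<in>T - Pos. c \<alpha> \<tau>) = 0" using f s1 s2 s3 g cardeq by linarith
      then have z: "\<forall>\<tau>\<in>T - Pos. c \<alpha> \<tau> = 0" using finT by simp
      have "\<forall>\<tau>\<in>T. c' \<alpha> \<tau> = c \<alpha> \<tau>"
      proof
        fix \<tau> assume \<tau>: "\<tau> \<in> T"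
        show "c' \<alpha> \<tau> = c \<alpha> \<tau>"
        proof (cases "\<tau> \<in> Pos")
          case True then show ?thesis using e \<tau> unfolding Pos_def by simp
        next
          case False then show ?thesis using z \<tau> unfolding Pos_def by auto
        qed
      qed
      then show ?thesis using cardeq unfolding N_def N'_def by simp
    qed
    have h1: "sat M' v' (Dia_eq \<alpha> l \<tau>) = sat M u (Dia_eq \<alpha> l \<tau>)" if "\<alpha> \<in> I" "\<tau> \<in> T" for \<alpha> l \<tau>
      using main[OF that(1)] that(2) unfolding c_def c'_def by (simp add: sat_Dia_eq)
    have h2: "sat M' v' (Dia \<alpha> (k \<alpha>) \<tau>) = sat M u (Dia \<alpha> (k \<alpha>) \<tau>)" if "\<alpha> \<in> I" "\<tau> \<in> T" for \<alpha> \<tau>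
      using main[OF that(1)] that(2) unfolding c_def c'_def by simp
    have h3: "card (nbh M' \<alpha> v') = card (nbh M \<alpha> u)" if "\<alpha> \<in> I" for \<alpha>
      using main[OF that] by blast
    have E1: "{Dia_eq \<alpha> l \<tau> | \<alpha> l \<tau>. \<alpha> \<in> I \<and> 1 \<le> l \<and> l \<le> k \<alpha> - 1 \<and> \<tau> \<in> T \<and> sat M' v' (Dia_eq \<alpha> l \<tau>)}
      = {Dia_eq \<alpha> l \<tau> | \<alpha> l \<tau>. \<alpha> \<in> I \<and> 1 \<le> l \<and> l \<le> k \<alpha> - 1 \<and> \<tau> \<in> T \<and> sat M u (Dia_eq \<alpha> l \<tau>)}"
      using h1 by blast
    have E2: "{Dia \<alpha> (k \<alpha>) \<tau> | \<alpha> \<tau>. \<alpha> \<in> I \<and> \<tau> \<in> T \<and> sat M' v' (Dia \<alpha> (k \<alpha>) \<tau>)}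
      = {Dia \<alpha> (k \<alpha>) \<tau> | \<alpha> \<tau>. \<alpha> \<in> I \<and> \<tau> \<in> T \<and> sat M u (Dia \<alpha> (k \<alpha>) \<tau>)}"
      using h2 by blast
    have E3: "{Dia_eq \<alpha> (card (nbh M' \<alpha> v')) Top | \<alpha>. \<alpha> \<in> I \<and> card (nbh M' \<alpha> v') < k \<alpha>}
      = {Dia_eq \<alpha> (card (nbh M \<alpha> u)) Top | \<alpha>. \<alpha> \<in> I \<and> card (nbh M \<alpha> u) < k \<alpha>}"
      using h3 by force
    have "GS P I k T M' v' = GS P I k T M u"
      unfolding GS_def te E1 E2 E3 ..
    then show ?thesis unfolding gtype_Cons T_def[symmetric] by simp
  qed
  show ?case
  proof (intro conjI allI impI)
    fix M u assume "is_model P I M \<and> u \<in> W M \<and> admissible_widths I M u (k # ks)"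
    then show "gtype P I (k # ks) M u = ctype P I (length (k # ks)) M u" using GP unfolding n_def by simp
  next
    fix M u M' v'
    assume "is_model P I M \<and> u \<in> W M \<and> admissible_widths I M u (k # ks) \<and> is_model P I M' \<and> v' \<in> W M' \<and>
       sat M u (gtype P I (k # ks) M' v')"
    then show "gtype P I (k # ks) M' v' = gtype P I (k # ks) M u" using XP by blast
  qed
qed


lemma if_01_pos[simp]: "(0 < (if P then Suc 0 else (0::nat))) = P" by simp

definition IFE :: "aexp \<Rightarrow> aexp \<Rightarrow> aexp \<Rightarrow> aexp" where
  "IFE c a b = Plus (Times (sgE c) a) (Times (nsgE c) b)"

lemma aval_IFE[simp]: "aval (IFE c a b) xs = (if aval c xs \<noteq> 0 then aval a xs else aval b xs)"
  by (simp add: IFE_def)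
lemma closed_IFE[simp]: "closed k (IFE c a b) = (closed k c \<and> closed k a \<and> closed k b)"
  by (auto simp: IFE_def)

definition shiftV :: "nat \<Rightarrow> aexp list" where "shiftV k = map (\<lambda>i. V (i + 2)) [0..<k]"

lemma length_shiftV[simp]: "length (shiftV k) = k" by (simp add: shiftV_def)
lemma closed_shiftV[simp]: "e \<in> set (shiftV k) \<Longrightarrow> closed (Suc (Suc k)) e" by (auto simp: shiftV_def)
lemma map_shift2: "length xs = k \<Longrightarrow> map (\<lambda>e. aval e (s # j # xs)) (shiftV k) = xs"
  by (rule nth_equalityI) (auto simp: shiftV_def)

definition conjE :: "nat \<Rightarrow> aexp \<Rightarrow> aexp \<Rightarrow> aexp" where
  "conjE k B Mem = (let G = shiftV k; X = Monus (Call B G) (V 1) in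
     Monus (Rec (Plus B (C 1)) (C 0)
        (IFE (Call Mem (X # G))
           (IFE (nsgE (V 0)) (Plus X (C 1)) (Plus (peE (C 3) (peE X (Monus (V 0) (C 1)))) (C 1)))
           (V 0))) (C 1))"

lemma closed_conjE[simp]: "closed k B \<Longrightarrow> closed (Suc k) Mem \<Longrightarrow> closed k (conjE k B Mem)"
  by (auto simp: conjE_def Let_def)
  


fun cl :: "nat list \<Rightarrow> nat" where
  "cl [] = 0"
| "cl [x] = x"
| "cl (x # y # ys) = prod_encode (3, prod_encode (x, cl (y # ys)))"

lemma code_conj_list_cl: "set xs \<subseteq> range code \<Longrightarrow> code (conj_list (map (inv code) xs)) = cl xs"
proof (induction xs rule: cl.induct)
  case 1 then show ?case by (simp add: prod_encode_def)
next
  case (2 x) then show ?case by (auto simp: f_inv_into_f)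
next
  case (3 x y ys) then show ?case by (auto simp: f_inv_into_f)
qed

definition enc :: "nat list \<Rightarrow> nat" where "enc L = (if L = [] then 0 else Suc (cl L))"

lemma conjE_correct:
  assumes B: "closed k B" and Mem: "closed (Suc k) Mem" and len: "length xs = k" and S: "finite S"
    and mem: "\<And>x. x \<le> aval B xs \<Longrightarrow> (aval Mem (x # xs) \<noteq> 0) = (x \<in> code ` S)"
    and bound: "\<And>\<psi>. \<psi> \<in> S \<Longrightarrow> code \<psi> \<le> aval B xs"
  shows "aval (conjE k B Mem) xs = code (conj_set S)"
proof -
  define Bv where "Bv = aval B xs"
  define CS where "CS = code ` S"
  define L where "L j = filter (\<lambda>x. x \<in> CS) [Suc Bv - j..<Suc Bv]" for j
  define step where "step = (\<lambda>j s. let x = Bv - j in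
      if aval Mem (x # xs) \<noteq> 0 then (if s = 0 then x + 1 else prod_encode (3, prod_encode (x, s - 1)) + 1) else s)"
  have av: "aval (conjE k B Mem) xs = rec_nat 0 step (Suc Bv) - 1"
    unfolding conjE_def Let_def step_def Bv_def
    by (simp add: map_shift2[OF len] Let_def cong: if_cong)
  have inv: "j \<le> Suc Bv \<Longrightarrow> rec_nat 0 step j = enc (L j)" for j
  proof (induction j)
    case 0 then show ?case by (simp add: L_def enc_def)
  next
    case (Suc j)
    then have IH: "rec_nat 0 step j = enc (L j)" by simp
    define x where "x = Bv - j"
    have xle: "x \<le> Bv" unfolding x_def by simp
    have sx: "Suc Bv - Suc j = x" using Suc.prems unfolding x_def by simp
    have sx1: "Suc Bv - j = Suc x" using Suc.prems unfolding x_def by simp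
    have upt: "[x..<Suc Bv] = x # [Suc x..<Suc Bv]" using xle by (simp add: upt_conv_Cons)
    have LS: "L (Suc j) = (if x \<in> CS then x # L j else L j)"
      unfolding L_def sx sx1 upt by simp
    have m: "(aval Mem (x # xs) \<noteq> 0) = (x \<in> CS)" using mem[OF xle[unfolded Bv_def]] unfolding CS_def .
    show ?case
    proof (cases "x \<in> CS")
      case True
      have "rec_nat 0 step (Suc j) = step j (enc (L j))" using IH by simp
      also have "\<dots> = enc (x # L j)"
        using True m unfolding step_def x_def[symmetric] Let_def enc_def
        by (cases "L j" rule: remdups_adj.cases) auto
      finally show ?thesis using LS True by simp
    next
      case False
      have "rec_nat 0 step (Suc j) = step j (enc (L j))" using IH by simp
      also have "\<dots> = enc (L j)"
        using False m unfolding step_def x_def[symmetric] Let_def by simp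
      finally show ?thesis using LS False by simp
    qed
  qed
  have Lfull: "L (Suc Bv) = sorted_list_of_set CS"
  proof -
    have "L (Suc Bv) = filter (\<lambda>x. x \<in> CS) [0..<Suc Bv]" unfolding L_def by simp
    moreover have "sorted_list_of_set CS = filter (\<lambda>x. x \<in> CS) [0..<Suc Bv]"
    proof (rule sorted_distinct_set_unique)
      have fCS: "finite CS" unfolding CS_def using S by simp
      show "sorted (sorted_list_of_set CS)" by simp
      show "distinct (sorted_list_of_set CS)" by simp
      show "sorted (filter (\<lambda>x. x \<in> CS) [0..<Suc Bv])"
        by (rule sorted_wrt_filter) (rule sorted_upt)
      show "distinct (filter (\<lambda>x. x \<in> CS) [0..<Suc Bv])" by (rule distinct_filter) (rule distinct_upt)
      have "\<forall>c\<in>CS. c < Suc Bv" using bound unfolding CS_def Bv_def by (auto simp: less_Suc_eq_le)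
      then show "set (sorted_list_of_set CS) = set (filter (\<lambda>x. x \<in> CS) [0..<Suc Bv])"
        using fCS by (auto simp del: upt_Suc)
    qed
    ultimately show ?thesis by simp
  qed
  have "aval (conjE k B Mem) xs = enc (sorted_list_of_set CS) - 1"
    using av inv[of "Suc Bv"] Lfull by simp
  also have "\<dots> = cl (sorted_list_of_set CS)" unfolding enc_def by simp
  also have "\<dots> = code (conj_set S)"
  proof -
    have "set (sorted_list_of_set CS) \<subseteq> range code" unfolding CS_def using S by auto
    then show ?thesis unfolding conj_set_def CS_def by (simp add: code_conj_list_cl)
  qed
  finally show ?thesis .
qed


lemma le_sum_list_map: "x \<in> set xs \<Longrightarrow> (f x :: nat) \<le> sum_list (map f xs)"
  by (induction xs) auto

lemma le_sum_lessThan: "u < (N::nat) \<Longrightarrow> (f u :: nat) \<le> (\<Sum>u<N. f u)"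
  by (rule member_le_sum) auto

lemma sum_mult_ind: "(\<Sum>u<(N::nat). (if P u then 1 else 0) * (if Q u then 1 else 0::nat)) = card {u. u < N \<and> P u \<and> Q u}"
proof -
  have "(\<Sum>u<N. (if P u then 1 else 0) * (if Q u then 1 else 0::nat)) = (\<Sum>u<N. if P u \<and> Q u then 1 else 0)"
    by (rule sum.cong) auto
  also have "\<dots> = card {u. u < N \<and> (P u \<and> Q u)}" by (rule sum_ind)
  finally show ?thesis by simp
qed

lemma sum_mult_ind_pos: "((\<Sum>u<(N::nat). (if P u then 1 else 0) * (if Q u then 1 else 0::nat)) \<noteq> 0) = (\<exists>u<N. P u \<and> Q u)"
  by (auto simp: sum_mult_ind card_eq_0_iff)

fun satE :: "form \<Rightarrow> aexp" where
  "satE Top = C 1"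
| "satE (Prop p) = memE (peE (C p) (V 0)) (V 3)"
| "satE (Neg \<psi>) = nsgE (satE \<psi>)"
| "satE (And a b) = Times (satE a) (satE b)"
| "satE (Dia \<alpha> k \<psi>) = leE (C k) (Sum (V 1) (Times (memE (peE (C \<alpha>) (peE (V 1) (V 0))) (V 3))
      (Call (satE \<psi>) [V 0, V 2, V 3, V 4])))"

lemma closed_satE[simp]: "closed (Suc (Suc (Suc (Suc 0)))) (satE \<psi>)"
  by (induction \<psi>) auto

lemma dmodel_nbh': "i < N \<Longrightarrow> nbh (dmodel N r v) \<alpha> i = {j. j < N \<and> prod_encode (\<alpha>, prod_encode (i, j)) \<in> set_decode r}"
  by (auto simp: dmodel_nbh)

lemma satE_correct: "i < N \<Longrightarrow> aval (satE \<psi>) [i, N, r, v] = (if sat (dmodel N r v) i \<psi> then 1 else 0)"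
proof (induction \<psi> arbitrary: i)
  case Top then show ?case by simp
next
  case (Prop p) then show ?case by (simp add: dmodel_Val)
next
  case (Neg \<psi>) then show ?case by simp
next
  case (And a b) then show ?case by simp
next
  case (Dia \<alpha> k \<psi>)
  let ?D = "dmodel N r v"
  have "(\<Sum>u<N. (if prod_encode (\<alpha>, prod_encode (i, u)) \<in> set_decode r then 1 else 0) *
          aval (satE \<psi>) [u, N, r, v])
      = (\<Sum>u<N. (if prod_encode (\<alpha>, prod_encode (i, u)) \<in> set_decode r then 1 else 0) *
          (if sat ?D u \<psi> then 1 else 0))"
    by (rule sum.cong) (simp_all add: Dia.IH)
  also have "\<dots> = card {u. u < N \<and> prod_encode (\<alpha>, prod_encode (i, u)) \<in> set_decode r \<and> sat ?D u \<psi>}"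
    by (rule sum_mult_ind)
  also have "{u. u < N \<and> prod_encode (\<alpha>, prod_encode (i, u)) \<in> set_decode r \<and> sat ?D u \<psi>}
      = {u \<in> nbh ?D \<alpha> i. sat ?D u \<psi>}" using Dia.prems by (auto simp: dmodel_nbh')
  finally have e: "(\<Sum>u<N. (if prod_encode (\<alpha>, prod_encode (i, u)) \<in> set_decode r then 1 else 0) *
          aval (satE \<psi>) [u, N, r, v]) = card {u \<in> nbh ?D \<alpha> i. sat ?D u \<psi>}" .
  show ?case by (simp add: e)
qed


definition valE :: "nat \<Rightarrow> aexp" where "valE p = memE (peE (C p) (V 1)) (V 4)"

definition summ0 :: "nat \<Rightarrow> aexp" where
  "summ0 p = Plus (Times (eqE (V 0) (C (code (Prop p)))) (valE p))
       (Times (eqE (V 0) (C (code (Neg (Prop p))))) (nsgE (valE p)))"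

definition Mem0 :: "nat list \<Rightarrow> aexp" where
  "Mem0 ps = sgE (sumL (map summ0 ps))"

definition ctE0 :: "nat list \<Rightarrow> aexp" where
  "ctE0 ps = conjE (Suc (Suc (Suc (Suc 0)))) (C (sum_list (map (\<lambda>p. code (Prop p) + code (Neg (Prop p))) ps))) (Mem0 ps)"

lemma closed_ctE0[simp]: "closed (Suc (Suc (Suc (Suc 0)))) (ctE0 ps)"
  unfolding ctE0_def by (rule closed_conjE) (auto simp: Mem0_def summ0_def valE_def)

lemma ctE0_correct:
  assumes i: "i < N"
  shows "aval (ctE0 ps) [i, N, r, v] = code (type_eps (set ps) (dmodel N r v) i)"
proof -
  let ?D = "dmodel N r v"
  have val: "aval (valE p) (x # [i, N, r, v]) = (if i \<in> Val ?D p then 1 else 0)" for p x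
    using i by (simp add: valE_def dmodel_Val)
  have mem: "(aval (Mem0 ps) (x # [i, N, r, v]) \<noteq> 0) = (x \<in> code ` lits (set ps) ?D i)" for x
  proof -
    have "(aval (Mem0 ps) (x # [i, N, r, v]) \<noteq> 0) =
       (\<exists>p\<in>set ps. (x = code (Prop p) \<and> i \<in> Val ?D p) \<or> (x = code (Neg (Prop p)) \<and> i \<notin> Val ?D p))"
    proof -
      have sm: "(aval (summ0 p) (x # [i, N, r, v]) \<noteq> 0) =
          ((x = code (Prop p) \<and> i \<in> Val ?D p) \<or> (x = code (Neg (Prop p)) \<and> i \<notin> Val ?D p))" for p
        unfolding summ0_def by (simp only: aval.simps aval_eqE aval_nsgE val) auto
      have "(aval (Mem0 ps) (x # [i, N, r, v]) \<noteq> 0) = (\<exists>p\<in>set ps. aval (summ0 p) (x # [i, N, r, v]) \<noteq> 0)"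
        unfolding Mem0_def by (simp only: aval_sgE aval_sumL) auto
      then show ?thesis using sm by simp
    qed
    also have "\<dots> = (x \<in> code ` lits (set ps) ?D i)"
      unfolding lits_def by (auto simp del: code.simps)
    finally show ?thesis .
  qed
  have bound: "code \<psi> \<le> sum_list (map (\<lambda>p. code (Prop p) + code (Neg (Prop p))) ps)"
    if psi: "\<psi> \<in> lits (set ps) ?D i" for \<psi>
  proof -
    obtain p where p: "p \<in> set ps" "\<psi> = Prop p \<or> \<psi> = Neg (Prop p)" using psi unfolding lits_def by fastforce
    have "code \<psi> \<le> code (Prop p) + code (Neg (Prop p))" using p(2) by auto
    also have "\<dots> \<le> sum_list (map (\<lambda>p. code (Prop p) + code (Neg (Prop p))) ps)"
      by (rule le_sum_list_map[OF p(1)])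
    finally show ?thesis .
  qed
  have "aval (ctE0 ps) [i, N, r, v] = code (conj_set (lits (set ps) ?D i))"
    unfolding ctE0_def
  proof (rule conjE_correct)
    show "closed (Suc (Suc (Suc (Suc (Suc 0))))) (Mem0 ps)" by (auto simp: Mem0_def summ0_def valE_def)
    show "finite (lits (set ps) ?D i)" by (rule finite_lits) simp
    show "\<And>x. x \<le> aval (C (sum_list (map (\<lambda>p. code (Prop p) + code (Neg (Prop p))) ps))) [i, N, r, v] \<Longrightarrow>
       (aval (Mem0 ps) (x # [i, N, r, v]) \<noteq> 0) = (x \<in> code ` lits (set ps) ?D i)" by (rule mem)
    show "\<And>\<psi>. \<psi> \<in> lits (set ps) ?D i \<Longrightarrow>
       code \<psi> \<le> aval (C (sum_list (map (\<lambda>p. code (Prop p) + code (Neg (Prop p))) ps))) [i, N, r, v]"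
      using bound by simp
  qed simp_all
  then show ?thesis by (simp add: type_eps_lits)
qed


definition EDGEx :: "nat \<Rightarrow> aexp" where "EDGEx \<alpha> = memE (peE (C \<alpha>) (peE (V 0) (V 1))) (V 2)"
definition DEQx :: "nat \<Rightarrow> aexp" where
  "DEQx \<alpha> = peE (C 3) (peE (peE (C 4) (peE (C \<alpha>) (peE (V 0) (V 1))))
                        (peE (C 2) (peE (C 4) (peE (C \<alpha>) (peE (Plus (V 0) (C 1)) (V 1))))))"
definition CNTx :: "aexp \<Rightarrow> nat \<Rightarrow> aexp" where
  "CNTx c \<alpha> = Sum (V 2) (Times (Call (EDGEx \<alpha>) [V 1, V 0, V 4]) (eqE (Call c [V 0, V 3, V 4, V 5]) (V 2)))"
definition DEGx :: "nat \<Rightarrow> aexp" where "DEGx \<alpha> = Sum (V 1) (Call (EDGEx \<alpha>) [V 1, V 0, V 3])"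
definition CAND1x :: "aexp \<Rightarrow> nat \<Rightarrow> aexp" where
  "CAND1x c \<alpha> = Call (DEQx \<alpha>) [Call (CNTx c \<alpha>) [V 1, Call c [V 0, V 2, V 3, V 4], V 2, V 3, V 4], Call c [V 0, V 2, V 3, V 4]]"
definition CAND3x :: "nat \<Rightarrow> aexp" where "CAND3x \<alpha> = Call (DEQx \<alpha>) [Call (DEGx \<alpha>) [V 0, V 1, V 2, V 3], C 0]"
definition summ1 :: "aexp \<Rightarrow> nat \<Rightarrow> aexp" where
  "summ1 c \<alpha> = Plus (Sum (V 2) (Times (Call (EDGEx \<alpha>) [V 2, V 0, V 4]) (eqE (V 1) (Call (CAND1x c \<alpha>) [V 0, V 2, V 3, V 4, V 5]))))
                    (eqE (V 0) (Call (CAND3x \<alpha>) [V 1, V 2, V 3, V 4]))"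
definition MemS :: "nat list \<Rightarrow> aexp \<Rightarrow> nat list \<Rightarrow> aexp" where
  "MemS ps c as = sgE (Plus (eqE (V 0) (Call (ctE0 ps) [V 1, V 2, V 3, V 4])) (sumL (map (summ1 c) as)))"
definition bsum :: "aexp \<Rightarrow> nat \<Rightarrow> aexp" where
  "bsum c \<alpha> = Plus (Sum (V 1) (Call (CAND1x c \<alpha>) [V 0, V 1, V 2, V 3, V 4])) (CAND3x \<alpha>)"
definition BdS :: "nat list \<Rightarrow> aexp \<Rightarrow> nat list \<Rightarrow> aexp" where
  "BdS ps c as = Plus (ctE0 ps) (sumL (map (bsum c) as))"

fun ctE :: "nat list \<Rightarrow> nat list \<Rightarrow> nat \<Rightarrow> aexp" where
  "ctE ps as 0 = ctE0 ps"
| "ctE ps as (Suc n) = conjE (Suc (Suc (Suc (Suc 0)))) (BdS ps (ctE ps as n) as) (MemS ps (ctE ps as n) as)"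

lemma closed_ctE[simp]: "closed (Suc (Suc (Suc (Suc 0)))) (ctE ps as n)"
proof (induction n)
  case 0 then show ?case by simp
next
  case (Suc n)
  show ?case unfolding ctE.simps
    by (rule closed_conjE)
       (use Suc in \<open>auto simp: BdS_def MemS_def bsum_def summ1_def CAND1x_def CAND3x_def CNTx_def DEGx_def
          EDGEx_def DEQx_def\<close>)
qed

lemma code_Dia_eq: "code (Dia_eq \<alpha> l \<phi>) = prod_encode (3, prod_encode (prod_encode (4, prod_encode (\<alpha>, prod_encode (l, code \<phi>))),
   prod_encode (2, prod_encode (4, prod_encode (\<alpha>, prod_encode (Suc l, code \<phi>))))))"
  by (simp add: Dia_eq_def)

lemma aval_DEQx: "aval (DEQx \<alpha>) [l, code \<phi>] = code (Dia_eq \<alpha> l \<phi>)"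
  by (simp add: DEQx_def code_Dia_eq)

lemma code_Top: "code Top = 0" by (simp add: prod_encode_def)

context
  fixes ps as :: "nat list" and n N r v :: nat and c :: aexp
  assumes cc: "closed (Suc (Suc (Suc (Suc 0)))) c"
    and cv: "\<And>u. u < N \<Longrightarrow> aval c [u, N, r, v] = code (ctype (set ps) (set as) n (dmodel N r v) u)"
begin

abbreviation "D \<equiv> dmodel N r v"
abbreviation "\<sigma> \<equiv> ctype (set ps) (set as) n D"

lemma aval_EDGEx: "i < N \<Longrightarrow> u < N \<Longrightarrow> aval (EDGEx \<alpha>) [i, u, r] = (if u \<in> nbh D \<alpha> i then 1 else 0)"
  by (simp add: EDGEx_def dmodel_nbh)

lemma nbh_lt: "u \<in> nbh D \<alpha> i \<Longrightarrow> u < N"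
  by (simp add: dmodel_nbh)

lemma aval_CNTx: "i < N \<Longrightarrow> u < N \<Longrightarrow> aval (CNTx c \<alpha>) [i, code (\<sigma> u), N, r, v] = cnt \<sigma> D \<alpha> i (\<sigma> u)"
proof -
  assume i: "i < N" and u: "u < N"
  have "aval (CNTx c \<alpha>) [i, code (\<sigma> u), N, r, v] =
     (\<Sum>u'<N. (if u' \<in> nbh D \<alpha> i then 1 else 0) * (if \<sigma> u' = \<sigma> u then 1 else 0))"
    unfolding CNTx_def by (simp add: aval_EDGEx i cv)
  also have "\<dots> = card {u'. u' < N \<and> u' \<in> nbh D \<alpha> i \<and> \<sigma> u' = \<sigma> u}" by (rule sum_mult_ind)
  also have "{u'. u' < N \<and> u' \<in> nbh D \<alpha> i \<and> \<sigma> u' = \<sigma> u} = {u' \<in> nbh D \<alpha> i. \<sigma> u' = \<sigma> u}"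
    using nbh_lt by blast
  finally show ?thesis unfolding cnt_def .
qed

lemma aval_DEGx: "i < N \<Longrightarrow> aval (DEGx \<alpha>) [i, N, r, v] = card (nbh D \<alpha> i)"
proof -
  assume i: "i < N"
  have "aval (DEGx \<alpha>) [i, N, r, v] = (\<Sum>u<N. if u \<in> nbh D \<alpha> i then 1 else 0)"
    unfolding DEGx_def by (simp add: aval_EDGEx i)
  also have "\<dots> = card {u. u < N \<and> u \<in> nbh D \<alpha> i}" by (rule sum_ind)
  also have "{u. u < N \<and> u \<in> nbh D \<alpha> i} = nbh D \<alpha> i" using nbh_lt by blast
  finally show ?thesis .
qed

lemma aval_CAND1x: "i < N \<Longrightarrow> u < N \<Longrightarrow>
    aval (CAND1x c \<alpha>) [u, i, N, r, v] = code (Dia_eq \<alpha> (cnt \<sigma> D \<alpha> i (\<sigma> u)) (\<sigma> u))"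
  unfolding CAND1x_def by (simp add: cv aval_CNTx aval_DEQx)

lemma aval_CAND3x: "i < N \<Longrightarrow> aval (CAND3x \<alpha>) [i, N, r, v] = code (Dia_eq \<alpha> (card (nbh D \<alpha> i)) Top)"
  unfolding CAND3x_def using aval_DEQx[of \<alpha> _ Top, unfolded code_Top] by (simp add: aval_DEGx)


lemma aval_summ1_pos: "i < N \<Longrightarrow> (aval (summ1 c \<alpha>) [x, i, N, r, v] \<noteq> 0) =
   ((\<exists>u\<in>nbh D \<alpha> i. x = code (Dia_eq \<alpha> (cnt \<sigma> D \<alpha> i (\<sigma> u)) (\<sigma> u))) \<or> x = code (Dia_eq \<alpha> (card (nbh D \<alpha> i)) Top))"
proof -
  assume i: "i < N"
  have "aval (summ1 c \<alpha>) [x, i, N, r, v] =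
     (\<Sum>u<N. (if u \<in> nbh D \<alpha> i then 1 else 0) * (if x = code (Dia_eq \<alpha> (cnt \<sigma> D \<alpha> i (\<sigma> u)) (\<sigma> u)) then 1 else 0))
     + (if x = code (Dia_eq \<alpha> (card (nbh D \<alpha> i)) Top) then 1 else 0)"
    unfolding summ1_def by (simp add: aval_EDGEx aval_CAND1x aval_CAND3x i)
  then show ?thesis using nbh_lt by (auto simp: sum_mult_ind_pos)
qed

definition S1 :: "nat \<Rightarrow> form set" where
  "S1 i = {type_eps (set ps) D i}
     \<union> (\<lambda>(\<alpha>, v). Dia_eq \<alpha> (cnt \<sigma> D \<alpha> i (\<sigma> v)) (\<sigma> v)) ` (SIGMA \<alpha>:set as. nbh D \<alpha> i)
     \<union> (\<lambda>\<alpha>. Dia_eq \<alpha> (card (nbh D \<alpha> i)) Top) ` set as"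

lemma ctype_S1: "ctype (set ps) (set as) (Suc n) D i = conj_set (S1 i)"
  unfolding S1_def by simp

lemma aval_MemS: "i < N \<Longrightarrow> (aval (MemS ps c as) (x # [i, N, r, v]) \<noteq> 0) = (x \<in> code ` S1 i)"
proof -
  assume i: "i < N"
  have "(aval (MemS ps c as) (x # [i, N, r, v]) \<noteq> 0) =
     (x = code (type_eps (set ps) D i) \<or> (\<exists>\<alpha>\<in>set as. aval (summ1 c \<alpha>) [x, i, N, r, v] \<noteq> 0))"
    unfolding MemS_def by (simp add: ctE0_correct[OF i])
  also have "\<dots> = (x = code (type_eps (set ps) D i) \<or>
      (\<exists>\<alpha>\<in>set as. (\<exists>u\<in>nbh D \<alpha> i. x = code (Dia_eq \<alpha> (cnt \<sigma> D \<alpha> i (\<sigma> u)) (\<sigma> u)))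
         \<or> x = code (Dia_eq \<alpha> (card (nbh D \<alpha> i)) Top)))"
    by (simp only: aval_summ1_pos[OF i])
  also have "\<dots> = (x \<in> code ` S1 i)"
    unfolding S1_def by (auto simp del: code.simps)
  finally show ?thesis .
qed

lemma bound_S1: "i < N \<Longrightarrow> \<psi> \<in> S1 i \<Longrightarrow> code \<psi> \<le> aval (BdS ps c as) [i, N, r, v]"
proof -
  assume i: "i < N" and \<psi>: "\<psi> \<in> S1 i"
  define f where "f \<alpha> = (\<Sum>u<N. code (Dia_eq \<alpha> (cnt \<sigma> D \<alpha> i (\<sigma> u)) (\<sigma> u))) + code (Dia_eq \<alpha> (card (nbh D \<alpha> i)) Top)" for \<alpha>
  have bd: "aval (BdS ps c as) [i, N, r, v] = code (type_eps (set ps) D i) + sum_list (map f as)"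
  proof -
    have "aval (bsum c \<alpha>) [i, N, r, v] = f \<alpha>" for \<alpha>
      unfolding bsum_def f_def by (simp add: aval_CAND1x aval_CAND3x i)
    then show ?thesis unfolding BdS_def by (simp add: ctE0_correct[OF i] comp_def)
  qed
  from \<psi> consider (a) "\<psi> = type_eps (set ps) D i"
    | (b) \<alpha> u where "\<alpha> \<in> set as" "u \<in> nbh D \<alpha> i" "\<psi> = Dia_eq \<alpha> (cnt \<sigma> D \<alpha> i (\<sigma> u)) (\<sigma> u)"
    | (c) \<alpha> where "\<alpha> \<in> set as" "\<psi> = Dia_eq \<alpha> (card (nbh D \<alpha> i)) Top"
    unfolding S1_def by auto
  then show ?thesis
  proof cases
    case a then show ?thesis unfolding bd by simp
  next
    case b
    have "code \<psi> \<le> (\<Sum>u<N. code (Dia_eq \<alpha> (cnt \<sigma> D \<alpha> i (\<sigma> u)) (\<sigma> u)))"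
      unfolding b(3) by (rule le_sum_lessThan[OF nbh_lt[OF b(2)]])
    also have "\<dots> \<le> f \<alpha>" unfolding f_def by simp
    also have "\<dots> \<le> sum_list (map f as)" by (rule le_sum_list_map[OF b(1)])
    finally show ?thesis unfolding bd by simp
  next
    case c
    have "code \<psi> \<le> f \<alpha>" unfolding f_def c(2) by simp
    also have "\<dots> \<le> sum_list (map f as)" by (rule le_sum_list_map[OF c(1)])
    finally show ?thesis unfolding bd by simp
  qed
qed

lemma finite_S1: "finite (S1 i)"
proof -
  have "finite (SIGMA \<alpha>:set as. nbh D \<alpha> i)"
    by (rule finite_SigmaI) (auto intro: finite_subset[of _ "{..<N}"] dest: nbh_lt)
  then show ?thesis unfolding S1_def by simp
qed

lemma ctE_step: "i < N \<Longrightarrow> aval (conjE (Suc (Suc (Suc (Suc 0)))) (BdS ps c as) (MemS ps c as)) [i, N, r, v]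
    = code (ctype (set ps) (set as) (Suc n) D i)"
  unfolding ctype_S1
proof (rule conjE_correct)
  assume i: "i < N"
  show "closed (Suc (Suc (Suc (Suc 0)))) (BdS ps c as)"
    using cc by (auto simp: BdS_def bsum_def CAND1x_def CAND3x_def CNTx_def DEGx_def EDGEx_def DEQx_def)
  show "closed (Suc (Suc (Suc (Suc (Suc 0))))) (MemS ps c as)"
    using cc by (auto simp: MemS_def summ1_def CAND1x_def CAND3x_def CNTx_def DEGx_def EDGEx_def DEQx_def)
  show "length [i, N, r, v] = Suc (Suc (Suc (Suc 0)))" by simp
  show "finite (S1 i)" by (rule finite_S1)
  show "\<And>x. x \<le> aval (BdS ps c as) [i, N, r, v] \<Longrightarrow> (aval (MemS ps c as) (x # [i, N, r, v]) \<noteq> 0) = (x \<in> code ` S1 i)"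
    by (rule aval_MemS[OF i])
  show "\<And>\<psi>. \<psi> \<in> S1 i \<Longrightarrow> code \<psi> \<le> aval (BdS ps c as) [i, N, r, v]"
    by (rule bound_S1[OF i])
qed

end

lemma ctE_correct: "i < N \<Longrightarrow> aval (ctE ps as n) [i, N, r, v] = code (ctype (set ps) (set as) n (dmodel N r v) i)"
proof (induction n arbitrary: i)
  case 0 then show ?case by (simp add: ctE0_correct)
next
  case (Suc n)
  show ?case unfolding ctE.simps
    by (rule ctE_step[OF closed_ctE Suc.IH Suc.prems])
qed


lemma ctype_full:
  assumes P: "finite P" and I: "finite I" and M: "is_model P I (M :: nat kmodel)" and w: "w \<in> W M"
  shows "is_full_type P I n (ctype P I n M w)"
proof -
  define ks :: "(nat \<Rightarrow> nat) list" where "ks = replicate n (\<lambda>\<alpha>. Suc (card (W M)))"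
  have a: "admissible_widths I M w ks" unfolding ks_def by (rule adm_exists[OF M])
  have "gtype P I ks M w = ctype P I (length ks) M w"
    using gtype_main[OF P I, of ks] M w a by blast
  then have "gtype P I ks M w = ctype P I n M w" unfolding ks_def by simp
  then show ?thesis unfolding is_full_type_def using M w a by (metis ks_def length_replicate)
qed

definition chkE :: "nat list \<Rightarrow> nat list \<Rightarrow> nat \<Rightarrow> form \<Rightarrow> aexp" where
  "chkE ps as n \<phi> = (let Ne = fstE (V 0); we = fstE (sndE (V 0)); re = fstE (sndE (sndE (V 0)));
      ve = sndE (sndE (sndE (V 0))); args = [we, Ne, re, ve] in
     nsgE (Times (ltE we Ne) (Times (Call (satE \<phi>) args) (eqE (Call (ctE ps as n) args) (V 1)))))"

lemma closed_chkE: "closed 2 (chkE ps as n \<phi>)"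
  by (simp add: chkE_def Let_def)

definition PhiS :: "nat list \<Rightarrow> nat list \<Rightarrow> nat \<Rightarrow> form \<Rightarrow> form set" where
  "PhiS ps as n \<phi> = {ctype (set ps) (set as) n (dmodel N r v) w | N r v w. w < N \<and> sat (dmodel N r v) w \<phi>}"

lemma chkE_set: "{x. \<exists>m. aval (chkE ps as n \<phi>) [m, x] = 0} = code ` PhiS ps as n \<phi>"
proof (intro set_eqI iffI)
  fix x assume "x \<in> {x. \<exists>m. aval (chkE ps as n \<phi>) [m, x] = 0}"
  then obtain m where m: "aval (chkE ps as n \<phi>) [m, x] = 0" by blast
  define N where "N = fst (prod_decode m)"
  define w where "w = fst (prod_decode (snd (prod_decode m)))"
  define r where "r = fst (prod_decode (snd (prod_decode (snd (prod_decode m)))))"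
  define v where "v = snd (prod_decode (snd (prod_decode (snd (prod_decode m)))))"
  have "aval (Times (ltE (fstE (sndE (V 0))) (fstE (V 0))) (Times (Call (satE \<phi>) [fstE (sndE (V 0)), fstE (V 0), fstE (sndE (sndE (V 0))), sndE (sndE (sndE (V 0)))])
     (eqE (Call (ctE ps as n) [fstE (sndE (V 0)), fstE (V 0), fstE (sndE (sndE (V 0))), sndE (sndE (sndE (V 0)))]) (V 1)))) [m, x] \<noteq> 0"
    using m unfolding chkE_def Let_def by (simp only: aval_nsgE) (simp split: if_splits)
  then have h: "w < N \<and> aval (satE \<phi>) [w, N, r, v] \<noteq> 0 \<and> aval (ctE ps as n) [w, N, r, v] = x"
    unfolding N_def w_def r_def v_def by (simp split: if_splits)
  then have wN: "w < N" by simp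
  have "sat (dmodel N r v) w \<phi>" using h satE_correct[OF wN] by (simp split: if_splits)
  moreover have "x = code (ctype (set ps) (set as) n (dmodel N r v) w)" using h ctE_correct[OF wN] by simp
  ultimately show "x \<in> code ` PhiS ps as n \<phi>" unfolding PhiS_def using wN by blast
next
  fix x assume "x \<in> code ` PhiS ps as n \<phi>"
  then obtain N r v w where wN: "w < N" and s: "sat (dmodel N r v) w \<phi>"
    and x: "x = code (ctype (set ps) (set as) n (dmodel N r v) w)" unfolding PhiS_def by blast
  define m where "m = prod_encode (N, prod_encode (w, prod_encode (r, v)))"
  have "aval (chkE ps as n \<phi>) [m, x] = 0"
    unfolding chkE_def Let_def m_def using satE_correct[OF wN, of \<phi> r v] ctE_correct[OF wN, of ps as n r v] wN s x
    by simp
  then show "x \<in> {x. \<exists>m. aval (chkE ps as n \<phi>) [m, x] = 0}" by blast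
qed

lemma re_PhiS: "re_form_set (PhiS ps as n \<phi>)"
  unfolding re_form_set_def chkE_set[symmetric] by (rule re_set_aexp[OF closed_chkE])


theorem lemma1:
  fixes \<Pi> :: "nat set" and a n :: nat and \<phi> :: form
  assumes "finite \<Pi>" and "0 < a"
    and "wff \<Pi> {1..a} \<phi>" and "md \<phi> = n"
  shows "\<exists>\<Phi>. re_form_set \<Phi> \<and> (\<forall>\<tau>\<in>\<Phi>. is_full_type \<Pi> {1..a} n \<tau>) \<and>
           (\<forall>(M :: 'w kmodel) w. is_model \<Pi> {1..a} M \<and> w \<in> W M \<longrightarrow>
              (sat M w \<phi> \<longleftrightarrow> (\<exists>\<tau>\<in>\<Phi>. sat M w \<tau>)))"
proof -
  define ps where "ps = sorted_list_of_set \<Pi>"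
  define as where "as = [1..<Suc a]"
  have P: "finite \<Pi>" by (rule assms(1))
  have I: "finite {1..a}" by simp
  have sp: "set ps = \<Pi>" unfolding ps_def using P by simp
  have sa: "set as = {1..a}" unfolding as_def by auto
  define \<Phi> where "\<Phi> = PhiS ps as n \<phi>"
  have re: "re_form_set \<Phi>" unfolding \<Phi>_def by (rule re_PhiS)
  have mem\<Phi>: "\<tau> \<in> \<Phi> \<longleftrightarrow> (\<exists>N r v w. \<tau> = ctype \<Pi> {1..a} n (dmodel N r v) w \<and> w < N \<and> sat (dmodel N r v) w \<phi>)" for \<tau>
    unfolding \<Phi>_def PhiS_def sp sa by blast
  have full: "\<forall>\<tau>\<in>\<Phi>. is_full_type \<Pi> {1..a} n \<tau>"
  proof
    fix \<tau> assume "\<tau> \<in> \<Phi>"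
    then obtain N r v w where \<tau>: "\<tau> = ctype \<Pi> {1..a} n (dmodel N r v) w" and wN: "w < N"
      using mem\<Phi> by blast
    have "is_model \<Pi> {1..a} (dmodel N r v)" using wN by (intro dmodel_is_model) simp
    moreover have "w \<in> W (dmodel N r v)" using wN by simp
    ultimately show "is_full_type \<Pi> {1..a} n \<tau>" unfolding \<tau> by (rule ctype_full[OF P I])
  qed
  have equiv: "sat M w \<phi> \<longleftrightarrow> (\<exists>\<tau>\<in>\<Phi>. sat M w \<tau>)"
    if M: "is_model \<Pi> {1..a} M" and w: "w \<in> W M" for M :: "'w kmodel" and w
  proof -
    obtain N r v f where N: "0 < N" and inj: "inj_on f (W M)" and img: "f ` W M = {0..<N}"
      and nb: "\<forall>\<alpha> x. \<alpha> \<in> {1..a} \<longrightarrow> x \<in> W M \<longrightarrow> nbh (dmodel N r v) \<alpha> (f x) = f ` nbh M \<alpha> x"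
      and vl: "\<forall>p x. p \<in> \<Pi> \<longrightarrow> x \<in> W M \<longrightarrow> (f x \<in> Val (dmodel N r v) p) = (x \<in> Val M p)"
      using encode_model[OF P I M] by (elim exE conjE) blast
    define D where "D = dmodel N r v"
    have DM: "is_model \<Pi> {1..a} D" unfolding D_def using N by (rule dmodel_is_model)
    have fD: "fnb {1..a} D" by (rule model_fnb[OF DM])
    have fw: "f w < N" using img w by auto
    have iso: "sat D (f x) \<psi> = sat M x \<psi>" if "wff \<Pi> {1..a} \<psi>" "x \<in> W M" for \<psi> x
      unfolding D_def
    proof (rule iso_sat[OF inj _ _ _ that])
      show "\<And>\<alpha> x. \<alpha> \<in> {1..a} \<Longrightarrow> x \<in> W M \<Longrightarrow> nbh (dmodel N r v) \<alpha> (f x) = f ` nbh M \<alpha> x" using nb by blast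
      show "\<And>\<alpha> x. \<alpha> \<in> {1..a} \<Longrightarrow> nbh M \<alpha> x \<subseteq> W M" using nbh_subset[OF M] by blast
      show "\<And>p x. p \<in> \<Pi> \<Longrightarrow> x \<in> W M \<Longrightarrow> (f x \<in> Val (dmodel N r v) p) = (x \<in> Val M p)" using vl by blast
    qed
    show ?thesis
    proof
      assume s: "sat M w \<phi>"
      define \<tau> where "\<tau> = ctype \<Pi> {1..a} n D (f w)"
      have "sat D (f w) \<phi>" using iso[OF assms(3) w] s by simp
      then have "\<tau> \<in> \<Phi>" unfolding mem\<Phi> \<tau>_def D_def using fw by blast
      moreover have "sat D (f w) \<tau>" unfolding \<tau>_def by (rule ctype_sat_self[OF P I fD])
      moreover have "wff \<Pi> {1..a} \<tau>" unfolding \<tau>_def by (rule wff_ctype[OF P I fD])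
      ultimately have "\<tau> \<in> \<Phi> \<and> sat M w \<tau>" using iso[of \<tau> w] w by simp
      then show "\<exists>\<tau>\<in>\<Phi>. sat M w \<tau>" by blast
    next
      assume "\<exists>\<tau>\<in>\<Phi>. sat M w \<tau>"
      then obtain \<tau> where \<tau>\<Phi>: "\<tau> \<in> \<Phi>" and s: "sat M w \<tau>" by blast
      then obtain N0 r0 v0 w0 where \<tau>: "\<tau> = ctype \<Pi> {1..a} n (dmodel N0 r0 v0) w0" and w0: "w0 < N0"
        and s0: "sat (dmodel N0 r0 v0) w0 \<phi>" using mem\<Phi> by blast
      define D0 where "D0 = dmodel N0 r0 v0"
      have D0M: "is_model \<Pi> {1..a} D0" unfolding D0_def using w0 by (intro dmodel_is_model) simp
      have fD0: "fnb {1..a} D0" by (rule model_fnb[OF D0M])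
      have w\<tau>: "wff \<Pi> {1..a} \<tau>" unfolding \<tau> D0_def[symmetric] by (rule wff_ctype[OF P I fD0])
      have "sat D (f w) \<tau>" using iso[OF w\<tau> w] s by simp
      then have eq: "ctype \<Pi> {1..a} n D (f w) = ctype \<Pi> {1..a} n D0 w0"
        unfolding \<tau> D0_def[symmetric] by (rule ctype_sat_eq[OF P I fD0 fD])
      have "sat D0 w0 \<phi> = sat D (f w) \<phi>"
        by (rule ctype_equiv[OF P I assms(3), of n, OF _ fD0 fD]) (use assms(4) eq in simp_all)
      then have "sat D (f w) \<phi>" using s0 unfolding D0_def by simp
      then show "sat M w \<phi>" using iso[OF assms(3) w] by simp
    qed
  qed
  show ?thesis using re full equiv by blast
qed


end
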